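(* For every integer $k\geq 6$, any deterministic distributed dynamic data structure for $k$-cycle listing that handles edge insertions and deletions requires $\Omega\left(\frac{\sqrt{n}}{\log n}\right)$ amortized rounds.
   Context: Highly dynamic network model: a synchronous network on a fixed set $V$ of $n$ nodes with unique identifiers starts as the empty graph; at the beginning of round $i$ the graph is $G_i=(V,E_i)$, obtained from the previous graph by an adversary inserting and/or deleting an arbitrary (unbounded) set of edges. At the start of each round every node is notified only of the insertions/deletions of edges incident to it; then each node may send a message of $O(\log n)$ bits to each of its current neighbors. A distributed dynamic data structure consists of a local part $DS_v$ at each node $v$; at the end of every round, $DS_v$ may be queried and must answer immediately, without any further communication, with $\texttt{true}$, $\texttt{false}$ or $\texttt{inconsistent}$. The amortized round complexity is at most $c$ if for every round $i$, the number of rounds up to round $i$ in which at least one node $v$ has $DS_v$ in an inconsistent state, divided by the total number of topology changes that occurred up to round $i$, is at most $c$. $k$-cycle listing: in round $i$, $DS_v$ at each node $v$ responds to queries of the form $H=\{v,u_1,\ldots,u_{k-1}\}$ (a cyclically ordered set of $k$ nodes containing $v$) with $\texttt{true}$, $\texttt{false}$ or $\texttt{inconsistent}$, such that if all nodes of $H$ are queried with $H$, then either at least one node responds $\texttt{inconsistent}$, or at least one node responds $\texttt{true}$ if and only if $H$ is a $k$-cycle in $G_{i-1}$. *)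

theory Defs
  imports Complex_Main
begin

definition valid_graph :: "nat \<Rightarrow> nat set set \<Rightarrow> bool" where
  "valid_graph n E \<longleftrightarrow> (\<forall>e\<in>E. \<exists>u v. u < n \<and> v < n \<and> u \<noteq> v \<and> e = {u, v})"

text \<open>An adversary: the sequence of graphs G i at the beginning of round i
  (rounds are numbered 1,2,...); G 0 is the initial empty graph. Changes between
  consecutive graphs are arbitrary.\<close>

definition adversary :: "nat \<Rightarrow> (nat \<Rightarrow> nat set set) \<Rightarrow> bool" where
  "adversary n G \<longleftrightarrow> G 0 = {} \<and> (\<forall>i. valid_graph n (G i))"

definition nbrs :: "nat set set \<Rightarrow> nat \<Rightarrow> nat set" where
  "nbrs E v = {u. {u, v} \<in> E}"

text \<open>Notifications at the start of round i: inserted / deleted incident edges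
  (given by the other endpoint).\<close>

definition ins :: "(nat \<Rightarrow> nat set set) \<Rightarrow> nat \<Rightarrow> nat \<Rightarrow> nat set" where
  "ins G i v = nbrs (G i) v - nbrs (G (i - 1)) v"

definition del :: "(nat \<Rightarrow> nat set set) \<Rightarrow> nat \<Rightarrow> nat \<Rightarrow> nat set" where
  "del G i v = nbrs (G (i - 1)) v - nbrs (G i) v"

definition changes :: "(nat \<Rightarrow> nat set set) \<Rightarrow> nat \<Rightarrow> nat" where
  "changes G i = (\<Sum>j\<in>{1..i}. card ((G j - G (j - 1)) \<union> (G (j - 1) - G j)))"

text \<open>All local functions receive the network size n and the node's own identifier.
  \<^item> dinit n v: initial local state;
  \<^item> dmsg n v s I D u: the message (bit string) sent by v to its current neighbour u,
    given v's state s from the end of the previous round and its notifications I, D;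
  \<^item> dtrans n v s I D R: new local state, where R u = Some m iff u is a current
    neighbour that sent message m;
  \<^item> dincons n v s: whether the local part DS_v is in an inconsistent state
    (then it answers 'inconsistent' to every query);
  \<^item> dans n v s H: the true/false answer to the query H otherwise.\<close>

record 's dds =
  dinit :: "nat \<Rightarrow> nat \<Rightarrow> 's"
  dmsg :: "nat \<Rightarrow> nat \<Rightarrow> 's \<Rightarrow> nat set \<Rightarrow> nat set \<Rightarrow> nat \<Rightarrow> bool list"
  dtrans :: "nat \<Rightarrow> nat \<Rightarrow> 's \<Rightarrow> nat set \<Rightarrow> nat set \<Rightarrow> (nat \<Rightarrow> bool list option) \<Rightarrow> 's"
  dincons :: "nat \<Rightarrow> nat \<Rightarrow> 's \<Rightarrow> bool"
  dans :: "nat \<Rightarrow> nat \<Rightarrow> 's \<Rightarrow> nat list \<Rightarrow> bool"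

text \<open>run A n G i v: the local state of node v at the end of round i.\<close>

fun run :: "'s dds \<Rightarrow> nat \<Rightarrow> (nat \<Rightarrow> nat set set) \<Rightarrow> nat \<Rightarrow> nat \<Rightarrow> 's" where
  "run A n G 0 = (\<lambda>v. dinit A n v)"
| "run A n G (Suc i) =
     (\<lambda>v. dtrans A n v (run A n G i v) (ins G (Suc i) v) (del G (Suc i) v)
            (\<lambda>u. if u \<in> nbrs (G (Suc i)) v
                 then Some (dmsg A n u (run A n G i u) (ins G (Suc i) u) (del G (Suc i) u) v)
                 else None))"

definition bandwidth :: "'s dds \<Rightarrow> nat \<Rightarrow> real \<Rightarrow> bool" where
  "bandwidth A n c \<longleftrightarrow>
     (\<forall>v s I D u. real (length (dmsg A n v s I D u)) \<le> c * ln (real n))"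

definition is_kcycle :: "nat set set \<Rightarrow> nat \<Rightarrow> nat list \<Rightarrow> bool" where
  "is_kcycle E k H \<longleftrightarrow> length H = k \<and> distinct H \<and>
     (\<forall>j<k. {H ! j, H ! ((j + 1) mod k)} \<in> E)"

definition lists_kcycles :: "'s dds \<Rightarrow> nat \<Rightarrow> nat \<Rightarrow> bool" where
  "lists_kcycles A n k \<longleftrightarrow>
     (\<forall>G i H. adversary n G \<and> i \<ge> 1 \<and> length H = k \<and> distinct H \<and> set H \<subseteq> {..<n} \<longrightarrow>
        (\<forall>v\<in>set H. \<not> dincons A n v (run A n G i v)) \<longrightarrow>
        ((\<exists>v\<in>set H. dans A n v (run A n G i v) H) \<longleftrightarrow> is_kcycle (G (i - 1)) k H))"

definition incons_rounds :: "'s dds \<Rightarrow> nat \<Rightarrow> (nat \<Rightarrow> nat set set) \<Rightarrow> nat \<Rightarrow> nat" where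
  "incons_rounds A n G i = card {j \<in> {1..i}. \<exists>v<n. dincons A n v (run A n G j v)}"

text \<open>Amortized round complexity at most c: for every adversary and every round i,
  (#inconsistent rounds up to i) / (#changes up to i) \<le> c, written without division.\<close>

definition amortized_at_most :: "'s dds \<Rightarrow> nat \<Rightarrow> real \<Rightarrow> bool" where
  "amortized_at_most A n c \<longleftrightarrow>
     (\<forall>G i. adversary n G \<longrightarrow> real (incons_rounds A n G i) \<le> c * real (changes G i))"

end

theory Submission
  imports Defs "HOL-Library.FuncSet"
begin


lemma two_mul_le_pow: "1 \<le> y \<Longrightarrow> 2*y \<le> (2::nat)^y"
proof (induction y)
  case 0 thus ?case by simp
next
  case (Suc y)
  show ?case
  proof (cases "y = 0")
    case True thus ?thesis by simp
  next
    case False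
    hence "2*y \<le> 2^y" using Suc by simp
    moreover have "2 \<le> (2::nat)^y" using False by (cases y) auto
    ultimately show ?thesis by simp
  qed
qed

lemma mul_pow_le: assumes "2*M+3 \<le> x" shows "x * 2^M \<le> (2::nat)^x"
proof -
  define y where "y = x - M"
  have x: "x = y + M" "M \<le> y" "1 \<le> y" using assms unfolding y_def by auto
  have "x * 2^M \<le> (2*y) * 2^M" using x by simp
  also have "\<dots> \<le> 2^y * 2^M" using two_mul_le_pow[OF x(3)] by simp
  also have "\<dots> = 2^x" using x(1) by (simp add: power_add)
  finally show ?thesis .
qed

lemma card_fiber_bound:
  assumes fin: "finite U" and RU: "R \<subseteq> U" and BU: "B \<subseteq> U - R"
  shows "card {Z \<in> Pow U. Z \<inter> R = Y \<and> B \<subseteq> Z} * 2^card B * 2^card R \<le> 2^card U"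
proof -
  let ?S = "{Z \<in> Pow U. Z \<inter> R = Y \<and> B \<subseteq> Z}"
  let ?W = "U - R - B"
  have "?S \<subseteq> (\<lambda>W. W \<union> Y \<union> B) ` Pow ?W"
  proof
    fix Z assume "Z \<in> ?S"
    hence "Z = (Z - R - B) \<union> Y \<union> B" "Z - R - B \<in> Pow ?W" by auto
    thus "Z \<in> (\<lambda>W. W \<union> Y \<union> B) ` Pow ?W" by blast
  qed
  hence "card ?S \<le> card ((\<lambda>W. W \<union> Y \<union> B) ` Pow ?W)"
    by (intro card_mono) (auto intro: finite_subset fin)
  also have "\<dots> \<le> card (Pow ?W)" by (rule card_image_le) (use fin in auto)
  also have "\<dots> = 2^card ?W" using fin by (simp add: card_Pow)
  finally have c1: "card ?S \<le> 2^card ?W" .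
  have fB: "finite B" "finite R" using finite_subset[OF BU] finite_subset[OF RU] fin by auto
  have "card ?W + card B + card R = card U"
  proof -
    have f1: "finite (U - R)" using fin by simp
    have "card ?W = card (U - R) - card B" using card_Diff_subset[OF fB(1) BU] by simp
    moreover have "card B \<le> card (U - R)" using card_mono[OF f1 BU] .
    ultimately have a: "card (U - R) = card ?W + card B" by simp
    have "card (U - R) = card U - card R" using card_Diff_subset[OF fB(2) RU] .
    moreover have "card R \<le> card U" using card_mono[OF fin RU] .
    ultimately have "card U = card (U - R) + card R" by simp
    thus ?thesis using a by simp
  qed
  hence "2^card ?W * 2^card B * 2^card R = (2::nat)^card U" by (simp add: power_add[symmetric])
  moreover have "card ?S * 2^card B * 2^card R \<le> 2^card ?W * 2^card B * 2^card R"
    using c1 by simp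
  ultimately show ?thesis by simp
qed

lemma count_beta:
  fixes view :: "'z set \<Rightarrow> 'v" and B :: "'z set \<Rightarrow> 'z set"
  assumes fin: "finite U" and RU: "R \<subseteq> U"
    and inv: "\<And>Z Z'. Z \<subseteq> U \<Longrightarrow> Z' \<subseteq> U \<Longrightarrow> view Z = view Z' \<Longrightarrow> B Z = B Z' \<and> Z \<inter> R = Z' \<inter> R"
    and sub: "\<And>Z. Z \<subseteq> U \<Longrightarrow> B Z \<subseteq> Z \<inter> (U - R)"
    and cv: "card (view ` Pow U) \<le> 2^card R * 2^M"
  shows "(\<Sum>Z\<in>Pow U. card (B Z)) \<le> (2*M+3) * 2^card U"
proof -
  let ?D = "2*M+2"
  let ?P1 = "{Z \<in> Pow U. card (B Z) \<le> ?D}"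
  let ?P2 = "{Z \<in> Pow U. \<not> card (B Z) \<le> ?D}"
  have finP: "finite (Pow U)" using fin by simp
  have un: "Pow U = ?P1 \<union> ?P2" by auto
  have split: "(\<Sum>Z\<in>Pow U. card (B Z)) = (\<Sum>Z\<in>?P1. card (B Z)) + (\<Sum>Z\<in>?P2. card (B Z))"
    by (subst un, rule sum.union_disjoint) (use finP in auto)
  have s1: "(\<Sum>Z\<in>?P1. card (B Z)) \<le> ?D * 2^card U"
  proof -
    have "(\<Sum>Z\<in>?P1. card (B Z)) \<le> (\<Sum>Z\<in>?P1. ?D)" by (rule sum_mono) auto
    also have "\<dots> = card ?P1 * ?D" by simp
    also have "card ?P1 \<le> card (Pow U)" by (rule card_mono[OF finP]) auto
    hence "card ?P1 * ?D \<le> 2^card U * ?D" using fin by (intro mult_le_mono1) (simp add: card_Pow)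
    finally show ?thesis by (simp add: mult.commute)
  qed
  have fiber: "(\<Sum>Z\<in>{Z \<in> ?P2. view Z = w}. card (B Z)) * (2^M * 2^card R) \<le> 2^card U"
    if w: "w \<in> view ` ?P2" for w
  proof -
    obtain Z0 where Z0: "Z0 \<in> ?P2" "view Z0 = w" using w by auto
    let ?F = "{Z \<in> ?P2. view Z = w}"
    let ?S = "{Z \<in> Pow U. Z \<inter> R = Z0 \<inter> R \<and> B Z0 \<subseteq> Z}"
    have FB: "B Z = B Z0 \<and> Z \<inter> R = Z0 \<inter> R" if zf: "Z \<in> ?F" for Z
    proof -
      have "Z \<subseteq> U" "Z0 \<subseteq> U" "view Z = view Z0" using zf Z0 by auto
      thus ?thesis using inv by blast
    qed
    have "(\<Sum>Z\<in>?F. card (B Z)) = (\<Sum>Z\<in>?F. card (B Z0))" using FB by simp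
    also have "\<dots> = card ?F * card (B Z0)" by simp
    finally have e1: "(\<Sum>Z\<in>?F. card (B Z)) = card ?F * card (B Z0)" .
    have "?F \<subseteq> ?S"
    proof
      fix Z assume zf: "Z \<in> ?F"
      hence zu: "Z \<subseteq> U" by auto
      have "B Z0 \<subseteq> Z" using FB[OF zf] sub[OF zu] by auto
      thus "Z \<in> ?S" using FB[OF zf] zu by auto
    qed
    hence cF: "card ?F \<le> card ?S" by (intro card_mono) (use finP in auto)
    have B0: "B Z0 \<subseteq> U - R" using sub[of Z0] Z0 by auto
    have big: "2*M+3 \<le> card (B Z0)" using Z0 by auto
    have "card ?F * card (B Z0) * (2^M * 2^card R) = card ?F * (card (B Z0) * 2^M) * 2^card R"
      by (simp add: mult.assoc)
    also have "\<dots> \<le> card ?S * 2^card (B Z0) * 2^card R"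
      using cF mul_pow_le[OF big] by (intro mult_le_mono mult_le_mono1) auto
    also have "\<dots> \<le> 2^card U" by (rule card_fiber_bound[OF fin RU B0])
    finally show ?thesis using e1 by simp
  qed
  have s2: "(\<Sum>Z\<in>?P2. card (B Z)) \<le> 2^card U"
  proof -
    have finP2: "finite ?P2" using finP by simp
    have "(\<Sum>Z\<in>?P2. card (B Z)) * (2^M * 2^card R)
        = (\<Sum>w\<in>view ` ?P2. (\<Sum>Z\<in>{Z \<in> ?P2. view Z = w}. card (B Z)) * (2^M * 2^card R))"
      by (subst sum.image_gen[OF finP2, of _ view]) (simp add: sum_distrib_right)
    also have "\<dots> \<le> (\<Sum>w\<in>view ` ?P2. 2^card U)" by (rule sum_mono) (rule fiber)
    also have "\<dots> = card (view ` ?P2) * 2^card U" by simp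
    also have "card (view ` ?P2) \<le> card (view ` Pow U)"
      by (intro card_mono) (use finP in auto)
    hence "card (view ` ?P2) * 2^card U \<le> (2^card R * 2^M) * 2^card U" using cv by simp
    finally have "(\<Sum>Z\<in>?P2. card (B Z)) * (2^M * 2^card R) \<le> 2^card U * (2^M * 2^card R)"
      by (simp add: mult_ac)
    thus ?thesis by simp
  qed
  have "(2*M+3) * 2^card U = ?D * 2^card U + (2::nat)^card U" by (simp add: algebra_simps)
  thus ?thesis using split s1 s2 by linarith
qed

lemma pow_pair:
  fixes U :: "'ea set"
  assumes fin: "finite U" and ab: "ea \<in> U" "eb \<in> U" "ea \<noteq> eb"
  shows "4 * card {Z\<in>Pow U. ea\<in>Z \<and> eb\<in>Z} = 2^card U"
proof -
  let ?W = "U - {ea,eb}"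
  have eq: "{Z\<in>Pow U. ea\<in>Z \<and> eb\<in>Z} = (\<lambda>W. W \<union> {ea,eb}) ` Pow ?W"
  proof
    show "{Z\<in>Pow U. ea\<in>Z \<and> eb\<in>Z} \<subseteq> (\<lambda>W. W \<union> {ea,eb}) ` Pow ?W"
    proof
      fix Z assume "Z \<in> {Z\<in>Pow U. ea\<in>Z \<and> eb\<in>Z}"
      hence "Z = (Z - {ea,eb}) \<union> {ea,eb}" "Z - {ea,eb} \<in> Pow ?W" by auto
      thus "Z \<in> (\<lambda>W. W \<union> {ea,eb}) ` Pow ?W" by blast
    qed
  qed (use ab in auto)
  have inj: "inj_on (\<lambda>W. W \<union> {ea,eb}) (Pow ?W)"
  proof (rule inj_onI)
    fix X Y assume "X \<in> Pow ?W" "Y \<in> Pow ?W" "X \<union> {ea,eb} = Y \<union> {ea,eb}"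
    thus "X = Y" by blast
  qed
  have "card {Z\<in>Pow U. ea\<in>Z \<and> eb\<in>Z} = 2^card ?W"
    unfolding eq using card_image[OF inj] fin by (simp add: card_Pow)
  moreover have "card ?W = card U - 2" using ab fin by (simp add: card_Diff_subset)
  moreover have "2 \<le> card U"
  proof -
    have "card {ea,eb} \<le> card U" by (rule card_mono[OF fin]) (use ab in auto)
    thus ?thesis using ab by simp
  qed
  ultimately have "card {Z\<in>Pow U. ea\<in>Z \<and> eb\<in>Z} = 2^(card U - 2)" "2 + (card U - 2) = card U" by auto
  hence "4 * card {Z\<in>Pow U. ea\<in>Z \<and> eb\<in>Z} = 2^2 * 2^(card U - 2)" "(2::nat)^2 * 2^(card U - 2) = 2^card U"
    by (simp, metis power_add)
  thus ?thesis by simp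
qed



lemma sim_run:
  assumes nb: "\<And>j v. v \<in> X \<Longrightarrow> nbrs (G j) v = nbrs (G' j) v"
    and ext: "\<And>j v u. 1 \<le> j \<Longrightarrow> v \<in> X \<Longrightarrow> u \<in> nbrs (G j) v \<Longrightarrow> u \<notin> X \<Longrightarrow>
        dmsg A n u (run A n G (j-1) u) (ins G j u) (del G j u) v =
        dmsg A n u (run A n G' (j-1) u) (ins G' j u) (del G' j u) v"
  shows "v \<in> X \<Longrightarrow> run A n G j v = run A n G' j v"
proof (induction j arbitrary: v)
  case 0 thus ?case by simp
next
  case (Suc j)
  have insd: "ins G i w = ins G' i w" "del G i w = del G' i w" if "w \<in> X" for i w
    using nb[OF that] unfolding ins_def del_def by auto
  have msgs: "(\<lambda>u. if u \<in> nbrs (G (Suc j)) v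
                 then Some (dmsg A n u (run A n G j u) (ins G (Suc j) u) (del G (Suc j) u) v)
                 else None) =
        (\<lambda>u. if u \<in> nbrs (G' (Suc j)) v
                 then Some (dmsg A n u (run A n G' j u) (ins G' (Suc j) u) (del G' (Suc j) u) v)
                 else None)"
  proof
    fix u
    show "(if u \<in> nbrs (G (Suc j)) v
                 then Some (dmsg A n u (run A n G j u) (ins G (Suc j) u) (del G (Suc j) u) v)
                 else None) =
        (if u \<in> nbrs (G' (Suc j)) v
                 then Some (dmsg A n u (run A n G' j u) (ins G' (Suc j) u) (del G' (Suc j) u) v)
                 else None)"
    proof (cases "u \<in> nbrs (G (Suc j)) v")
      case True
      show ?thesis
      proof (cases "u \<in> X")
        case True
        thus ?thesis using Suc.IH[of u] insd[OF True] nb[OF Suc.prems] by simp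
      next
        case False
        thus ?thesis using ext[of "Suc j" v u] \<open>u \<in> nbrs (G (Suc j)) v\<close> Suc.prems nb[OF Suc.prems] by simp
      qed
    next
      case False thus ?thesis using nb[OF Suc.prems] by simp
    qed
  qed
  show ?case using Suc.IH[OF Suc.prems] insd[OF Suc.prems] msgs by simp
qed

locale LB =
  fixes A :: "'s dds" and n k r s d L b :: nat
  assumes k_def: "k = d + 6"
    and r_pos: "1 \<le> r" and s_pos: "1 \<le> s" and L2: "2 \<le> L"
    and nbig: "2*r*(s+d+2) \<le> n"
    and bw: "\<And>v st I D u. length (dmsg A n v st I D u) \<le> b"
    and corr: "lists_kcycles A n k"
begin

definition "KK = s + d + 2"
definition node :: "nat \<Rightarrow> nat \<Rightarrow> nat" where "node c x = c*KK + x"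
definition comp :: "nat \<Rightarrow> nat set" where "comp c = {c*KK..<c*KK+KK}"
definition "UU = {..<2*r} \<times> {..<s}"
definition row :: "nat \<Rightarrow> (nat \<times> nat) set" where "row c = {c} \<times> {..<s}"

definition compE :: "nat \<Rightarrow> (nat \<times> nat) set \<Rightarrow> nat set set" where
  "compE c Z = {{node c m, node c (Suc m)} | m. m < d}
     \<union> {{node c d, node c (d+2+i)} | i. (c,i) \<in> Z}
     \<union> {{node c (d+2+i), node c (d+1)} | i. (c,i) \<in> Z}"

definition static :: "(nat \<times> nat) set \<Rightarrow> nat set set" where
  "static Z = (\<Union>c<2*r. compE c Z)"

definition cutP :: "nat \<Rightarrow> nat \<Rightarrow> nat set set" where
  "cutP p q = {{node p 0, node (r+q) d}, {node p (d+1), node (r+q) (d+1)}}"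

definition cutR :: "nat \<Rightarrow> nat set set" where
  "cutR j = (if 1 \<le> j \<and> (j-1) div L < r*r then cutP ((j-1) div L div r) ((j-1) div L mod r) else {})"

definition GZ :: "(nat \<times> nat) set \<Rightarrow> nat \<Rightarrow> nat set set" where
  "GZ Z j = (if j = 0 then {} else static Z \<union> cutR j)"

definition "st Z = run A n (GZ Z)"

lemma KK_ge: "d + 2 \<le> KK" "s \<le> KK" unfolding KK_def by auto

lemma node_inj:
  assumes "x1 < KK" "x2 < KK"
  shows "node c1 x1 = node c2 x2 \<longleftrightarrow> c1 = c2 \<and> x1 = x2"
proof
  assume h: "node c1 x1 = node c2 x2"
  have "(c1*KK + x1) div KK = c1" "(c2*KK + x2) div KK = c2"
    using assms by auto
  moreover have "(c1*KK + x1) mod KK = x1" "(c2*KK + x2) mod KK = x2"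
    using assms by auto
  ultimately show "c1 = c2 \<and> x1 = x2" using h unfolding node_def by metis
qed auto

lemma node_comp: "x1 < KK \<Longrightarrow> node c x1 \<in> comp c"
  unfolding node_def comp_def by auto

lemma comp_disj: "c1 \<noteq> c2 \<Longrightarrow> v \<in> comp c1 \<Longrightarrow> v \<in> comp c2 \<Longrightarrow> False"
proof -
  assume "c1 \<noteq> c2" "v \<in> comp c1" "v \<in> comp c2"
  hence "v div KK = c1" "v div KK = c2"
    unfolding comp_def by (auto simp: div_nat_eqI mult.commute)
  thus False using \<open>c1 \<noteq> c2\<close> by simp
qed

lemma comp_lt_n: "c < 2*r \<Longrightarrow> v \<in> comp c \<Longrightarrow> v < n"
proof -
  assume "c < 2*r" "v \<in> comp c"
  hence "v < c*KK + KK" unfolding comp_def by auto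
  also have "c*KK + KK = (c+1)*KK" by simp
  also have "... \<le> (2*r)*KK" using \<open>c < 2*r\<close> by (intro mult_right_mono) auto
  also have "... \<le> n" using nbig unfolding KK_def by simp
  finally show ?thesis .
qed

lemma compE_sub:
  assumes "Z \<subseteq> UU" "e \<in> compE c Z"
  shows "e \<subseteq> comp c"
proof -
  have "d < KK" "Suc d < KK" unfolding KK_def by auto
  have i: "(c,i) \<in> Z \<Longrightarrow> d+2+i < KK" for i using assms(1) unfolding UU_def KK_def by auto
  show ?thesis using assms(2) unfolding compE_def
    using node_comp \<open>d < KK\<close> \<open>Suc d < KK\<close> i by (auto intro!: node_comp)
qed

lemma cutR_cases:
  assumes "e \<in> cutR j"
  obtains p q where "p < r" "q < r" "1 \<le> j" "(j-1) div L = p*r+q" "e \<in> cutP p q"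
proof -
  let ?f = "(j-1) div L"
  have h: "1 \<le> j" "?f < r*r" "e \<in> cutP (?f div r) (?f mod r)"
    using assms unfolding cutR_def by (auto split: if_splits)
  have "?f div r < r" using h(2) by (simp add: less_mult_imp_div_less)
  moreover have "?f mod r < r" using r_pos by simp
  moreover have "?f = (?f div r)*r + ?f mod r" by simp
  ultimately show ?thesis using that h by blast
qed

lemma cutP_sub:
  assumes "p < r" "q < r" "e \<in> cutP p q"
  shows "\<exists>x y. x < n \<and> y < n \<and> x \<noteq> y \<and> e = {x, y}"
proof -
  have kk: "0 < KK" "d < KK" "d+1 < KK" unfolding KK_def by auto
  have c: "p < 2*r" "r+q < 2*r" using assms by auto
  have "node p 0 \<noteq> node (r+q) d" "node p (d+1) \<noteq> node (r+q) (d+1)"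
    using node_inj kk assms by auto
  moreover have "node p 0 < n" "node (r+q) d < n" "node p (d+1) < n" "node (r+q) (d+1) < n"
    using comp_lt_n[OF c(1) node_comp] comp_lt_n[OF c(2) node_comp] kk by auto
  ultimately show ?thesis using assms(3) unfolding cutP_def by blast
qed

lemma compE_valid:
  assumes "Z \<subseteq> UU" "c < 2*r" "e \<in> compE c Z"
  shows "\<exists>x y. x < n \<and> y < n \<and> x \<noteq> y \<and> e = {x, y}"
proof -
  have sub: "e \<subseteq> comp c" using compE_sub assms by blast
  have i: "(c,i) \<in> Z \<Longrightarrow> d+2+i < KK" for i using assms(1) unfolding UU_def KK_def by auto
  have kk: "d < KK" "d+1 < KK" unfolding KK_def by auto
  from assms(3) obtain x y where e: "e = {node c x, node c y}" "x \<noteq> y" "x < KK" "y < KK"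
  proof -
    from assms(3) consider (a) m where "m < d" "e = {node c m, node c (Suc m)}"
      | (b) i where "(c,i) \<in> Z" "e = {node c d, node c (d+2+i)}"
      | (cc) i where "(c,i) \<in> Z" "e = {node c (d+2+i), node c (d+1)}"
      unfolding compE_def by blast
    thus ?thesis
    proof cases
      case a thus ?thesis using that[of m "Suc m"] kk by auto
    next
      case b thus ?thesis using that[of d "d+2+i"] kk i by auto
    next
      case cc thus ?thesis using that[of "d+2+i" "d+1"] kk i by auto
    qed
  qed
  have "node c x \<noteq> node c y" using node_inj e by simp
  moreover have "node c x < n" "node c y < n" using comp_lt_n[OF assms(2) node_comp] e by auto
  ultimately show ?thesis using e by blast
qed

lemma valid_GZ: assumes "Z \<subseteq> UU" shows "adversary n (GZ Z)"
  unfolding adversary_def valid_graph_def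
proof (intro conjI allI ballI)
  show "GZ Z 0 = {}" unfolding GZ_def by simp
  fix i e assume "e \<in> GZ Z i"
  hence "e \<in> static Z \<or> e \<in> cutR i" unfolding GZ_def by (auto split: if_splits)
  thus "\<exists>u v. u < n \<and> v < n \<and> u \<noteq> v \<and> e = {u, v}"
  proof
    assume "e \<in> static Z"
    then obtain c where "c < 2*r" "e \<in> compE c Z" unfolding static_def by auto
    thus ?thesis using compE_valid assms by blast
  next
    assume "e \<in> cutR i"
    then obtain p q where "p < r" "q < r" "e \<in> cutP p q" by (rule cutR_cases)
    thus ?thesis using cutP_sub by blast
  qed
qed

definition "other c q' = (if c < r then r + q' else q')"
definition "pp c q' = (if c < r then c else q')"
definition "qq c q' = (if c < r then q' else c - r)"
definition "cutnode c e = (if e = (0::nat) then (if c < r then node c 0 else node c d) else node c (d+1))"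
definition "start p q = (p*r+q)*L"

lemma static_v:
  assumes "Z \<subseteq> UU" "v \<in> comp c"
  shows "{u,v} \<in> static Z \<longleftrightarrow> c < 2*r \<and> {u,v} \<in> compE c Z"
proof
  assume "{u,v} \<in> static Z"
  then obtain c' where c': "c' < 2*r" "{u,v} \<in> compE c' Z" unfolding static_def by auto
  hence "v \<in> comp c'" using compE_sub[OF assms(1)] by blast
  hence "c' = c" using comp_disj assms(2) by blast
  thus "c < 2*r \<and> {u,v} \<in> compE c Z" using c' by simp
qed (auto simp: static_def)

lemma compE_row:
  assumes "Z \<subseteq> UU" "Z' \<subseteq> UU" "Z \<inter> row c = Z' \<inter> row c"
  shows "compE c Z = compE c Z'"
proof -
  have "(c,i) \<in> Z \<longleftrightarrow> (c,i) \<in> Z'" for i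
  proof -
    have "(c,i) \<in> Z \<longleftrightarrow> (c,i) \<in> Z \<inter> row c" using assms(1) unfolding UU_def row_def by auto
    also have "\<dots> \<longleftrightarrow> (c,i) \<in> Z' \<inter> row c" using assms(3) by simp
    also have "\<dots> \<longleftrightarrow> (c,i) \<in> Z'" using assms(2) unfolding UU_def row_def by auto
    finally show ?thesis .
  qed
  thus ?thesis unfolding compE_def by simp
qed

lemma nbrs_eq:
  assumes "Z \<subseteq> UU" "Z' \<subseteq> UU" "Z \<inter> row c = Z' \<inter> row c" "v \<in> comp c"
  shows "nbrs (GZ Z j) v = nbrs (GZ Z' j) v"
proof -
  have "{u,v} \<in> static Z \<longleftrightarrow> {u,v} \<in> static Z'" for u
    using static_v[OF assms(1) assms(4)] static_v[OF assms(2) assms(4)] compE_row[OF assms(1-3)] by simp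
  thus ?thesis unfolding nbrs_def GZ_def by auto
qed

lemma ext_nbr:
  assumes "Z \<subseteq> UU" "v \<in> comp c" "u \<in> nbrs (GZ Z j) v" "u \<notin> comp c"
  shows "\<exists>q' m e. q' < r \<and> m < L \<and> e < 2 \<and> j = start (pp c q') (qq c q') + 1 + m
           \<and> v = cutnode c e \<and> u = cutnode (other c q') e"
proof -
  have uv: "{u,v} \<in> GZ Z j" using assms(3) unfolding nbrs_def by simp
  have "{u,v} \<notin> static Z"
  proof
    assume "{u,v} \<in> static Z"
    hence "{u,v} \<in> compE c Z" using static_v[OF assms(1,2)] by simp
    hence "u \<in> comp c" using compE_sub[OF assms(1)] by blast
    thus False using assms(4) by simp
  qed
  hence "{u,v} \<in> cutR j" using uv unfolding GZ_def by (auto split: if_splits)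
  then obtain p q where pq: "p < r" "q < r" "1 \<le> j" "(j-1) div L = p*r+q" "{u,v} \<in> cutP p q"
    by (rule cutR_cases)
  define m where "m = (j-1) mod L"
  have m: "m < L" using L2 unfolding m_def by simp
  have jj: "j = (p*r+q)*L + 1 + m"
  proof -
    have "j - 1 = (p*r+q)*L + m" using div_mult_mod_eq[of "j-1" L] pq(4) unfolding m_def by metis
    thus ?thesis using pq(3) by simp
  qed
  have kk: "0 < KK" "d < KK" "d+1 < KK" unfolding KK_def by auto
  have cp: "node p 0 \<in> comp p" "node p (d+1) \<in> comp p"
      "node (r+q) d \<in> comp (r+q)" "node (r+q) (d+1) \<in> comp (r+q)"
    using node_comp kk by auto
  from pq(5) consider "v = node p 0" "u = node (r+q) d" | "v = node (r+q) d" "u = node p 0"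
    | "v = node p (d+1)" "u = node (r+q) (d+1)" | "v = node (r+q) (d+1)" "u = node p (d+1)"
    unfolding cutP_def by (auto simp: doubleton_eq_iff)
  thus ?thesis
  proof cases
    case 1
    hence "c = p" using comp_disj assms(2) cp by blast
    thus ?thesis using 1 pq m jj by (intro exI[of _ q] exI[of _ m] exI[of _ 0])
        (simp add: start_def pp_def qq_def cutnode_def other_def)
  next
    case 2
    hence "c = r+q" using comp_disj assms(2) cp by blast
    thus ?thesis using 2 pq m jj by (intro exI[of _ p] exI[of _ m] exI[of _ 0])
        (simp add: start_def pp_def qq_def cutnode_def other_def)
  next
    case 3
    hence "c = p" using comp_disj assms(2) cp by blast
    thus ?thesis using 3 pq m jj by (intro exI[of _ q] exI[of _ m] exI[of _ 1])
        (simp add: start_def pp_def qq_def cutnode_def other_def)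
  next
    case 4
    hence "c = r+q" using comp_disj assms(2) cp by blast
    thus ?thesis using 4 pq m jj by (intro exI[of _ p] exI[of _ m] exI[of _ 1])
        (simp add: start_def pp_def qq_def cutnode_def other_def)
  qed
qed

definition "Dm = {..<r} \<times> {..<L} \<times> {..<(2::nat)}"

definition msgv :: "(nat \<times> nat) set \<Rightarrow> nat \<Rightarrow> nat \<times> nat \<times> nat \<Rightarrow> bool list" where
  "msgv Z c x = (case x of (q', m, e) \<Rightarrow>
     dmsg A n (cutnode (other c q') e)
       (st Z (start (pp c q') (qq c q') + m) (cutnode (other c q') e))
       (ins (GZ Z) (start (pp c q') (qq c q') + 1 + m) (cutnode (other c q') e))
       (del (GZ Z) (start (pp c q') (qq c q') + 1 + m) (cutnode (other c q') e)) (cutnode c e))"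

lemma st_eq:
  assumes "Z \<subseteq> UU" "Z' \<subseteq> UU" "Z \<inter> row c = Z' \<inter> row c"
    "restrict (msgv Z c) Dm = restrict (msgv Z' c) Dm" "v \<in> comp c"
  shows "st Z j v = st Z' j v"
  unfolding st_def
proof (rule sim_run[where X = "comp c"])
  show "nbrs (GZ Z j) v = nbrs (GZ Z' j) v" if "v \<in> comp c" for j v
    using nbrs_eq[OF assms(1-3) that] .
  fix j v u assume h: "1 \<le> j" "v \<in> comp c" "u \<in> nbrs (GZ Z j) v" "u \<notin> comp c"
  from ext_nbr[OF assms(1) h(2-4)] obtain q' m e where
    qme: "q' < r" "m < L" "e < 2" "j = start (pp c q') (qq c q') + 1 + m"
      "v = cutnode c e" "u = cutnode (other c q') e" by blast
  have "(q',m,e) \<in> Dm" using qme unfolding Dm_def by simp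
  hence "msgv Z c (q',m,e) = msgv Z' c (q',m,e)" using assms(4)
    by (metis restrict_apply')
  thus "dmsg A n u (run A n (GZ Z) (j - 1) u) (ins (GZ Z) j u) (del (GZ Z) j u) v =
        dmsg A n u (run A n (GZ Z') (j - 1) u) (ins (GZ Z') j u) (del (GZ Z') j u) v"
  proof -
    have jm: "j - 1 = start (pp c q') (qq c q') + m" using qme(4) by simp
    have "msgv Z c (q',m,e) = dmsg A n u (st Z (j - 1) u) (ins (GZ Z) j u) (del (GZ Z) j u) v"
         "msgv Z' c (q',m,e) = dmsg A n u (st Z' (j - 1) u) (ins (GZ Z') j u) (del (GZ Z') j u) v"
      unfolding msgv_def jm qme(4,5,6) by simp_all
    thus ?thesis using \<open>msgv Z c (q',m,e) = msgv Z' c (q',m,e)\<close> unfolding st_def by simp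
  qed
qed (use assms(5) in simp)

definition allcons :: "(nat \<times> nat) set \<Rightarrow> nat \<Rightarrow> nat \<Rightarrow> nat \<Rightarrow> bool" where
  "allcons Z p q t = (\<forall>v \<in> comp p \<union> comp (r+q). \<not> dincons A n v (st Z t v))"

definition tval :: "(nat \<times> nat) set \<Rightarrow> nat \<Rightarrow> nat \<Rightarrow> nat option" where
  "tval Z p q = (if \<exists>x\<in>{2..L}. allcons Z p q (start p q + x)
      then Some (SOME x. x \<in> {2..L} \<and> allcons Z p q (start p q + x)) else None)"

lemma tval_Some: "tval Z p q = Some x \<Longrightarrow> x \<in> {2..L} \<and> allcons Z p q (start p q + x)"
proof -
  assume h: "tval Z p q = Some x"
  hence ex: "\<exists>x. x \<in> {2..L} \<and> allcons Z p q (start p q + x)" unfolding tval_def by (auto split: if_splits)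
  hence "x = (SOME x. x \<in> {2..L} \<and> allcons Z p q (start p q + x))" using h unfolding tval_def by (auto split: if_splits)
  thus ?thesis using someI_ex[OF ex] by simp
qed

definition Hc :: "nat \<Rightarrow> nat \<Rightarrow> nat \<Rightarrow> nat list" where
  "Hc p q i = map (node p) [0..<Suc d] @
     [node p (d+2+i), node p (d+1), node (r+q) (d+1), node (r+q) (d+2+i), node (r+q) d]"

definition view where
  "view Z c = (Z \<inter> row c, restrict (msgv Z c) Dm, restrict (\<lambda>q'. tval Z (pp c q') (qq c q')) {..<r})"

definition beta :: "(nat \<times> nat) set \<Rightarrow> nat \<Rightarrow> (nat \<times> nat) set" where
  "beta Z c = {(other c q', i) | q' i. q' < r \<and> i < s \<and>
     (\<exists>x. tval Z (pp c q') (qq c q') = Some x \<and>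
       (\<exists>v\<in>set (Hc (pp c q') (qq c q') i) \<inter> comp c.
          dans A n v (st Z (start (pp c q') (qq c q') + x) v) (Hc (pp c q') (qq c q') i)))}"

lemma beta_inv:
  assumes "Z \<subseteq> UU" "Z' \<subseteq> UU" "view Z c = view Z' c"
  shows "beta Z c = beta Z' c"
proof -
  have r: "Z \<inter> row c = Z' \<inter> row c" and m: "restrict (msgv Z c) Dm = restrict (msgv Z' c) Dm"
    and t: "restrict (\<lambda>q'. tval Z (pp c q') (qq c q')) {..<r} = restrict (\<lambda>q'. tval Z' (pp c q') (qq c q')) {..<r}"
    using assms(3) unfolding view_def by auto
  have se: "v \<in> comp c \<Longrightarrow> st Z j v = st Z' j v" for j v using st_eq[OF assms(1,2) r m] by blast
  have te: "q' < r \<Longrightarrow> tval Z (pp c q') (qq c q') = tval Z' (pp c q') (qq c q')" for q'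
    using fun_cong[OF t, of q'] by simp
  have P: "(\<exists>x. tval Z (pp c q') (qq c q') = Some x \<and>
       (\<exists>v\<in>set (Hc (pp c q') (qq c q') i) \<inter> comp c.
          dans A n v (st Z (start (pp c q') (qq c q') + x) v) (Hc (pp c q') (qq c q') i))) =
     (\<exists>x. tval Z' (pp c q') (qq c q') = Some x \<and>
       (\<exists>v\<in>set (Hc (pp c q') (qq c q') i) \<inter> comp c.
          dans A n v (st Z' (start (pp c q') (qq c q') + x) v) (Hc (pp c q') (qq c q') i)))"
    if "q' < r" for q' i
  proof -
    have "\<And>x. (\<exists>v\<in>set (Hc (pp c q') (qq c q') i) \<inter> comp c.
          dans A n v (st Z (start (pp c q') (qq c q') + x) v) (Hc (pp c q') (qq c q') i)) =
       (\<exists>v\<in>set (Hc (pp c q') (qq c q') i) \<inter> comp c.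
          dans A n v (st Z' (start (pp c q') (qq c q') + x) v) (Hc (pp c q') (qq c q') i))"
      by (rule bex_cong[OF refl]) (simp add: se)
    thus ?thesis using te[OF that] by simp
  qed
  show ?thesis unfolding beta_def
    apply (rule Collect_cong)
    using P by blast
qed

lemma node_set_eq:
  assumes "ea < KK" "eb < KK" "fa < KK" "fb < KK"
  shows "{node c ea, node c eb} = {node c fa, node c fb} \<longleftrightarrow> {ea,eb} = {fa,fb}"
  using node_inj[OF assms(1) assms(3)] node_inj[OF assms(1) assms(4)]
    node_inj[OF assms(2) assms(3)] node_inj[OF assms(2) assms(4)]
  by (auto simp: doubleton_eq_iff)

lemma cut_cross:
  assumes "e \<in> cutR j" "e \<subseteq> comp c" shows False
proof -
  obtain p q where pq: "p < r" "q < r" "e \<in> cutP p q" using assms(1) by (rule cutR_cases)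
  have kk: "0 < KK" "d < KK" "d+1 < KK" unfolding KK_def by auto
  have ne: "p \<noteq> r + q" using pq by simp
  from pq(3) consider "e = {node p 0, node (r+q) d}" | "e = {node p (d+1), node (r+q) (d+1)}"
    unfolding cutP_def by blast
  thus False
  proof cases
    case 1
    hence "node p 0 \<in> comp c" "node (r+q) d \<in> comp c" using assms(2) by auto
    thus False using comp_disj node_comp kk ne by metis
  next
    case 2
    hence "node p (d+1) \<in> comp c" "node (r+q) (d+1) \<in> comp c" using assms(2) by auto
    thus False using comp_disj node_comp kk ne by metis
  qed
qed

lemma in_GZ_inner:
  assumes "Z \<subseteq> UU" "c < 2*r" "x < KK" "y < KK" "j \<ge> 1"
  shows "{node c x, node c y} \<in> GZ Z j \<longleftrightarrow> {node c x, node c y} \<in> compE c Z"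
proof -
  have sub: "{node c x, node c y} \<subseteq> comp c" using node_comp assms by auto
  have "{node c x, node c y} \<notin> cutR j" using cut_cross sub by blast
  moreover have "{node c x, node c y} \<in> static Z \<longleftrightarrow> {node c x, node c y} \<in> compE c Z"
    using static_v[OF assms(1), of "node c y" c "node c x"] node_comp assms by auto
  ultimately show ?thesis unfolding GZ_def using assms(5) by auto
qed

lemma leaf_edge:
  assumes "Z \<subseteq> UU" "c < 2*r" "i < s" "j \<ge> 1"
  shows "{node c d, node c (d+2+i)} \<in> GZ Z j \<longleftrightarrow> (c,i) \<in> Z"
proof -
  have kk: "d < KK" "d+1 < KK" "d+2+i < KK" using assms(3) unfolding KK_def by auto
  have "{node c d, node c (d+2+i)} \<in> compE c Z \<longleftrightarrow> (c,i) \<in> Z"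
  proof
    assume "(c,i) \<in> Z" thus "{node c d, node c (d+2+i)} \<in> compE c Z" unfolding compE_def by blast
  next
    assume h: "{node c d, node c (d+2+i)} \<in> compE c Z"
    have zi: "(c,i') \<in> Z \<Longrightarrow> d+2+i' < KK" for i' using assms(1) unfolding UU_def KK_def by auto
    from h consider (a) m where "m < d" "{node c d, node c (d+2+i)} = {node c m, node c (Suc m)}"
      | (b) i' where "(c,i') \<in> Z" "{node c d, node c (d+2+i)} = {node c d, node c (d+2+i')}"
      | (cc) i' where "(c,i') \<in> Z" "{node c d, node c (d+2+i)} = {node c (d+2+i'), node c (d+1)}"
      unfolding compE_def by blast
    thus "(c,i) \<in> Z"
    proof cases
      case a
      have "Suc m < KK" "m < KK" using a(1) kk by auto
      hence "{d, d+2+i} = {m, Suc m}" using node_set_eq[where ea=d and eb="d+2+i" and fa=m and fb="Suc m" and c=c] kk a(2) by simp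
      thus ?thesis using a by (auto simp: doubleton_eq_iff)
    next
      case b
      hence "{d, d+2+i} = {d, d+2+i'}" using node_set_eq[where ea=d and eb="d+2+i" and fa=d and fb="d+2+i'" and c=c] kk zi[OF b(1)] by simp
      thus ?thesis using b by (auto simp: doubleton_eq_iff)
    next
      case cc
      hence "{d, d+2+i} = {d+2+i', d+1}" using node_set_eq[where ea=d and eb="d+2+i" and fa="d+2+i'" and fb="d+1" and c=c] kk zi[OF cc(1)] by simp
      thus ?thesis by (auto simp: doubleton_eq_iff)
    qed
  qed
  thus ?thesis using in_GZ_inner[OF assms(1,2) kk(1) kk(3) assms(4)] by simp
qed

lemma leaf_edge2:
  assumes "Z \<subseteq> UU" "(c,i) \<in> Z" "j \<ge> 1"
  shows "{node c (d+2+i), node c (d+1)} \<in> GZ Z j"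
proof -
  have "c < 2*r" using assms unfolding UU_def by auto
  hence "{node c (d+2+i), node c (d+1)} \<in> static Z" using assms(2) unfolding static_def compE_def by blast
  thus ?thesis using assms(3) unfolding GZ_def by simp
qed

lemma chain_edge:
  assumes "c < 2*r" "m < d" "j \<ge> 1"
  shows "{node c m, node c (Suc m)} \<in> GZ Z j"
proof -
  have "{node c m, node c (Suc m)} \<in> static Z" using assms unfolding static_def compE_def by blast
  thus ?thesis using assms(3) unfolding GZ_def by simp
qed

lemma Hc_len: "length (Hc p q i) = k"
  unfolding Hc_def k_def by simp

lemma Hc_nth:
  "x < Suc d \<Longrightarrow> Hc p q i ! x = node p x"
  "Hc p q i ! (Suc d) = node p (d+2+i)"
  "Hc p q i ! (d+2) = node p (d+1)"
  "Hc p q i ! (d+3) = node (r+q) (d+1)"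
  "Hc p q i ! (d+4) = node (r+q) (d+2+i)"
  "Hc p q i ! (d+5) = node (r+q) d"
  unfolding Hc_def by (auto simp: nth_append numeral_eq_Suc simp del: upt_Suc)

lemma Hc_set:
  assumes "i < s"
  shows "set (Hc p q i) \<subseteq> comp p \<union> comp (r+q)"
proof -
  have kk: "d < KK" "d+1 < KK" "d+2+i < KK" using assms unfolding KK_def by auto
  have "x < Suc d \<Longrightarrow> node p x \<in> comp p" for x using node_comp kk by auto
  thus ?thesis unfolding Hc_def using node_comp kk by auto
qed

lemma Hc_distinct:
  assumes "p < r" "q < r" "i < s"
  shows "distinct (Hc p q i)"
proof -
  have kk: "d < KK" "d+1 < KK" "d+2+i < KK" using assms unfolding KK_def by auto
  have ne: "p \<noteq> r+q" using assms by simp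
  have inj: "inj_on (node p) {0..<Suc d}"
    unfolding inj_on_def using node_inj kk by auto
  have d1: "distinct (map (node p) [0..<Suc d])" using inj by (simp add: distinct_map del: upt_Suc)
  have d2: "distinct [node p (d+2+i), node p (d+1), node (r+q) (d+1), node (r+q) (d+2+i), node (r+q) d]"
    using node_inj[OF kk(3) kk(2)] node_inj[OF kk(3) kk(1)] node_inj[OF kk(2) kk(1)]
      node_inj[OF kk(2) kk(3)] node_inj[OF kk(2) kk(2)] node_inj[OF kk(3) kk(3)]
      node_inj[OF kk(1) kk(2)] node_inj[OF kk(1) kk(3)] ne
    by auto
  have d3: "node p x \<notin> set [node p (d+2+i), node p (d+1), node (r+q) (d+1), node (r+q) (d+2+i), node (r+q) d]"
    if "x < Suc d" for x
  proof -
    have x: "x < KK" using that kk by simp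
    show ?thesis using node_inj[OF x kk(1)] node_inj[OF x kk(2)] node_inj[OF x kk(3)] ne that by auto
  qed
  have d4: "set (map (node p) [0..<Suc d]) \<inter> set [node p (d+2+i), node p (d+1), node (r+q) (d+1), node (r+q) (d+2+i), node (r+q) d] = {}"
  proof -
    have "y \<notin> set [node p (d+2+i), node p (d+1), node (r+q) (d+1), node (r+q) (d+2+i), node (r+q) d]"
      if yy: "y \<in> set (map (node p) [0..<Suc d])" for y
    proof -
      obtain x where "x < Suc d" "y = node p x" using yy by (auto simp del: upt_Suc)
      thus ?thesis using d3 by blast
    qed
    thus ?thesis by blast
  qed
  show ?thesis unfolding Hc_def distinct_append using d1 d2 d4 by blast
qed

lemma Hc_cycle:
  assumes Z: "Z \<subseteq> UU" and pq: "p < r" "q < r" "i < s" and j: "j \<ge> 1" "cutR j = cutP p q"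
  shows "is_kcycle (GZ Z j) k (Hc p q i) \<longleftrightarrow> (p,i) \<in> Z \<and> (r+q,i) \<in> Z"
proof -
  have cutin: "e \<in> cutP p q \<Longrightarrow> e \<in> GZ Z j" for e using j unfolding GZ_def by auto
  have c1: "p < 2*r" "r+q < 2*r" using pq by auto
  have le1: "{node p d, node p (d+2+i)} \<in> GZ Z j \<longleftrightarrow> (p,i) \<in> Z" using leaf_edge[OF Z c1(1) pq(3) j(1)] .
  have le2: "{node (r+q) (d+2+i), node (r+q) d} \<in> GZ Z j \<longleftrightarrow> (r+q,i) \<in> Z"
    using leaf_edge[OF Z c1(2) pq(3) j(1)] by (simp add: insert_commute)
  have kd: "k = d + 6" by (rule k_def)
  show ?thesis
  proof
    assume cyc: "is_kcycle (GZ Z j) k (Hc p q i)"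
    have all: "\<forall>x<k. {Hc p q i ! x, Hc p q i ! ((x + 1) mod k)} \<in> GZ Z j"
      using cyc unfolding is_kcycle_def by blast
    have m1: "(d+1) mod k = Suc d" "(d+4+1) mod k = d+5" by (simp_all add: kd)
    have "{Hc p q i ! d, Hc p q i ! ((d+1) mod k)} \<in> GZ Z j" by (rule all[rule_format]) (simp add: kd)
    hence a: "(p,i) \<in> Z" using le1 Hc_nth(1)[of d] Hc_nth(2) m1 by simp
    have "{Hc p q i ! (d+4), Hc p q i ! ((d+4+1) mod k)} \<in> GZ Z j" by (rule all[rule_format]) (simp add: kd)
    hence b: "(r+q,i) \<in> Z" using le2 Hc_nth(5,6) m1 by simp
    show "(p,i) \<in> Z \<and> (r+q,i) \<in> Z" using a b by simp
  next
    assume h: "(p,i) \<in> Z \<and> (r+q,i) \<in> Z"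
    have "{Hc p q i ! x, Hc p q i ! ((x + 1) mod k)} \<in> GZ Z j" if x: "x < k" for x
    proof -
      consider "x < d" | "x = d" | "x = d+1" | "x = d+2" | "x = d+3" | "x = d+4" | "x = d+5"
        using x kd by linarith
      thus ?thesis
      proof cases
        case 1
        have "(x+1) mod k = Suc x" using 1 kd by simp
        thus ?thesis using chain_edge[OF c1(1) 1 j(1)] Hc_nth(1)[of x] Hc_nth(1)[of "Suc x"] 1 by simp
      next
        case 2 thus ?thesis using le1 h Hc_nth(1)[of d] Hc_nth(2) kd by simp
      next
        case 3
        have "(x+1) mod k = d+2" using 3 kd by simp
        thus ?thesis using leaf_edge2[OF Z _ j(1), of p i] h Hc_nth(2,3) 3 by simp
      next
        case 4
        have "(x+1) mod k = d+3" using 4 kd by simp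
        thus ?thesis using cutin[of "{node p (d+1), node (r+q) (d+1)}"] Hc_nth(3,4) 4
          unfolding cutP_def by simp
      next
        case 5
        have "(x+1) mod k = d+4" using 5 kd by simp
        thus ?thesis using leaf_edge2[OF Z _ j(1), of "r+q" i] h Hc_nth(4,5) 5 by (simp add: insert_commute)
      next
        case 6
        have "(x+1) mod k = d+5" using 6 kd by simp
        thus ?thesis using le2 h Hc_nth(5,6) 6 by simp
      next
        case 7
        have "(x+1) mod k = 0" using 7 kd by (simp add: add.commute)
        thus ?thesis using cutin[of "{node p 0, node (r+q) d}"] Hc_nth(6) Hc_nth(1)[of 0] 7
          unfolding cutP_def by (simp add: insert_commute)
      qed
    qed
    thus "is_kcycle (GZ Z j) k (Hc p q i)"
      unfolding is_kcycle_def using Hc_len Hc_distinct[OF pq] by auto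
  qed
qed

lemma phase_lt: "p < r \<Longrightarrow> q < r \<Longrightarrow> p*r+q < r*r"
proof -
  assume "p < r" "q < r"
  hence "p*r + q < p*r + r" by simp
  also have "\<dots> = (p+1)*r" by simp
  also have "\<dots> \<le> r*r" using \<open>p < r\<close> by (intro mult_right_mono) auto
  finally show ?thesis .
qed

lemma cutR_phase:
  assumes "p < r" "q < r" "1 \<le> y" "y \<le> L"
  shows "cutR (start p q + y) = cutP p q"
proof -
  have "(start p q + y - 1) div L = p*r+q"
  proof -
    have "start p q + y - 1 = (p*r+q)*L + (y-1)" using assms(3) unfolding start_def by simp
    moreover have "y - 1 < L" using assms(3,4) by simp
    ultimately show ?thesis by simp
  qed
  moreover have "(p*r+q) div r = p" "(p*r+q) mod r = q" using assms(2) by auto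
  ultimately show ?thesis using phase_lt[OF assms(1,2)] assms(3) unfolding cutR_def by simp
qed

lemma answer_correct:
  assumes Z: "Z \<subseteq> UU" and pq: "p < r" "q < r" "i < s" and tv: "tval Z p q = Some x"
  shows "(\<exists>v\<in>set (Hc p q i). dans A n v (st Z (start p q + x) v) (Hc p q i))
           \<longleftrightarrow> (p,i) \<in> Z \<and> (r+q,i) \<in> Z"
proof -
  have x: "x \<in> {2..L}" "allcons Z p q (start p q + x)" using tval_Some[OF tv] by auto
  have hs: "set (Hc p q i) \<subseteq> comp p \<union> comp (r+q)" using Hc_set[OF pq(3)] .
  have hn: "set (Hc p q i) \<subseteq> {..<n}"
    using hs comp_lt_n[of p] comp_lt_n[of "r+q"] pq by fastforce
  have cons: "\<forall>v\<in>set (Hc p q i). \<not> dincons A n v (run A n (GZ Z) (start p q + x) v)"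
    using x(2) hs unfolding allcons_def st_def by blast
  have eq1: "(\<exists>v\<in>set (Hc p q i). dans A n v (run A n (GZ Z) (start p q + x) v) (Hc p q i))
         \<longleftrightarrow> is_kcycle (GZ Z (start p q + x - 1)) k (Hc p q i)"
    using corr[unfolded lists_kcycles_def, rule_format, of "GZ Z" "start p q + x" "Hc p q i"]
      valid_GZ[OF Z] x(1) Hc_len Hc_distinct[OF pq] hn cons by auto
  define j where "j = start p q + (x - 1)"
  have j1: "start p q + x - 1 = j" using x(1) unfolding j_def by auto
  have j2: "cutR j = cutP p q" unfolding j_def using cutR_phase[OF pq(1,2), of "x-1"] x(1) by force
  have j3: "j \<ge> 1" unfolding j_def using x(1) by auto
  have "is_kcycle (GZ Z j) k (Hc p q i) \<longleftrightarrow> (p,i) \<in> Z \<and> (r+q,i) \<in> Z"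
    by (rule Hc_cycle[OF Z pq j3 j2])
  thus ?thesis using eq1 unfolding j1 st_def by simp
qed

lemma pp_qq:
  assumes "c < 2*r" "q' < r"
  shows "pp c q' < r" "qq c q' < r"
    "(c = pp c q' \<and> other c q' = r + qq c q') \<or> (c = r + qq c q' \<and> other c q' = pp c q')"
  using assms unfolding pp_def qq_def other_def by auto

lemma beta_sub:
  assumes Z: "Z \<subseteq> UU" and c: "c < 2*r"
  shows "beta Z c \<subseteq> Z \<inter> (UU - row c)"
proof
  fix y assume "y \<in> beta Z c"
  then obtain q' i x v where h: "y = (other c q', i)" "q' < r" "i < s"
    "tval Z (pp c q') (qq c q') = Some x" "v \<in> set (Hc (pp c q') (qq c q') i)"
    "dans A n v (st Z (start (pp c q') (qq c q') + x) v) (Hc (pp c q') (qq c q') i)"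
    unfolding beta_def by blast
  note P = pp_qq[OF c h(2)]
  have "(pp c q', i) \<in> Z \<and> (r + qq c q', i) \<in> Z"
    using answer_correct[OF Z P(1) P(2) h(3) h(4)] h(5,6) by blast
  moreover have "other c q' \<noteq> c" "other c q' < 2*r" using P(3) P(1,2) by auto
  ultimately show "y \<in> Z \<inter> (UU - row c)" using P(3) h(1,3) unfolding UU_def row_def by auto
qed

lemma good_cover:
  assumes Z: "Z \<subseteq> UU" and pq: "p < r" "q < r" "i < s" and tv: "tval Z p q \<noteq> None"
    and inz: "(p,i) \<in> Z" "(r+q,i) \<in> Z"
  shows "(r+q, i) \<in> beta Z p \<or> (p, i) \<in> beta Z (r+q)"
proof -
  obtain x where x: "tval Z p q = Some x" using tv by auto
  obtain v where v: "v \<in> set (Hc p q i)" "dans A n v (st Z (start p q + x) v) (Hc p q i)"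
    using answer_correct[OF Z pq x] inz by blast
  have "v \<in> comp p \<or> v \<in> comp (r+q)" using Hc_set[OF pq(3)] v(1) by blast
  thus ?thesis
  proof
    assume vc: "v \<in> comp p"
    have "pp p q = p" "qq p q = q" "other p q = r+q" using pq unfolding pp_def qq_def other_def by auto
    hence "(other p q, i) \<in> beta Z p" unfolding beta_def using pq x v vc by fastforce
    thus ?thesis using \<open>other p q = r+q\<close> by simp
  next
    assume vc: "v \<in> comp (r+q)"
    have "pp (r+q) p = p" "qq (r+q) p = q" "other (r+q) p = p" unfolding pp_def qq_def other_def by auto
    hence "(other (r+q) p, i) \<in> beta Z (r+q)" unfolding beta_def using pq x v vc by fastforce
    thus ?thesis using \<open>other (r+q) p = p\<close> by simp
  qed
qed

end


lemma sum_pow2_le: "(\<Sum>i\<le>b. (2::nat)^i) < 2^Suc b"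
  by (induction b) auto

context LB
begin

definition "Lb = {xs :: bool list. set xs \<subseteq> UNIV \<and> length xs \<le> b}"
definition "TS = insert None (Some ` {2..L})"
definition "MM = 2*r*L*(b+1) + r*L"

lemma card_Lb: "card Lb \<le> 2^(b+1)"
proof -
  have "card Lb = (\<Sum>i\<le>b. card (UNIV :: bool set)^i)" unfolding Lb_def
    by (rule card_lists_length_le) simp
  also have "\<dots> = (\<Sum>i\<le>b. 2^i)" by simp
  also have "\<dots> < 2^Suc b" by (rule sum_pow2_le)
  finally show ?thesis by simp
qed

lemma card_TS: "card TS = L"
proof -
  have "None \<notin> Some ` {2..L}" by auto
  hence "card TS = Suc (card (Some ` {2..L}))" unfolding TS_def by (simp add: card_insert_if)
  also have "card (Some ` {2..L}) = card {2..L}" by (rule card_image) simp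
  also have "card {2..L} = L - 1" by simp
  finally show ?thesis using L2 by simp
qed

lemma view_in:
  assumes "Z \<subseteq> UU"
  shows "view Z c \<in> Pow (row c) \<times> (\<Pi>\<^sub>E x\<in>Dm. Lb) \<times> (\<Pi>\<^sub>E x\<in>{..<r}. TS)"
proof -
  have "msgv Z c x \<in> Lb" for x
    unfolding Lb_def msgv_def using bw by (auto split: prod.splits)
  moreover have "tval Z p q \<in> TS" for p q
    using tval_Some[of Z p q] unfolding TS_def by (cases "tval Z p q") auto
  ultimately show ?thesis unfolding view_def by auto
qed

lemma card_view:
  assumes "c < 2*r"
  shows "card ((\<lambda>Z. view Z c) ` Pow UU) \<le> 2^card (row c) * 2^MM"
proof -
  let ?P = "Pow (row c) \<times> (\<Pi>\<^sub>E x\<in>Dm. Lb) \<times> (\<Pi>\<^sub>E x\<in>{..<r}. TS)"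
  have fr: "finite (row c)" unfolding row_def by simp
  have fD: "finite Dm" unfolding Dm_def by simp
  have fLb: "finite Lb" unfolding Lb_def by (rule finite_lists_length_le) simp
  have fTS: "finite TS" unfolding TS_def by simp
  have fin: "finite ?P" using fr fD fLb fTS by (intro finite_cartesian_product finite_PiE) auto
  have "card ((\<lambda>Z. view Z c) ` Pow UU) \<le> card ?P"
  proof (rule card_mono[OF fin])
    show "(\<lambda>Z. view Z c) ` Pow UU \<subseteq> ?P"
    proof (rule image_subsetI)
      fix Z assume "Z \<in> Pow UU" thus "view Z c \<in> ?P" using view_in by simp
    qed
  qed
  also have "card ?P = 2^card (row c) * (card Lb ^ card Dm * card TS ^ r)"
    using fr fD by (simp add: card_cartesian_product card_PiE card_Pow)
  also have "card Dm = 2*r*L" unfolding Dm_def by (simp add: card_cartesian_product)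
  also have "card Lb ^ (2*r*L) \<le> (2^(b+1))^(2*r*L)" by (rule power_mono[OF card_Lb]) simp
  also have "(2^(b+1))^(2*r*L) = (2::nat)^(2*r*L*(b+1))" by (metis power_mult mult.commute)
  also have "card TS ^ r = L^r" using card_TS by simp
  also have "L^r \<le> (2^L)^r" by (rule power_mono) (simp_all add: less_imp_le)
  also have "(2^L)^r = (2::nat)^(r*L)" by (metis power_mult mult.commute)
  also have "(2::nat)^(2*r*L*(b+1)) * 2^(r*L) = 2^MM" unfolding MM_def by (simp only: power_add)
  finally show ?thesis by simp
qed

definition II :: "(nat \<times> nat) set \<Rightarrow> nat \<Rightarrow> nat \<Rightarrow> nat set" where
  "II Z p q = {i\<in>{..<s}. (p,i) \<in> Z \<and> (r+q,i) \<in> Z}"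
definition badp :: "(nat \<times> nat) set \<Rightarrow> (nat \<times> nat) set" where
  "badp Z = {pq \<in> {..<r}\<times>{..<r}. tval Z (fst pq) (snd pq) = None}"

lemma finite_UU: "finite UU" unfolding UU_def by simp

lemma beta_row_sum:
  assumes Z: "Z \<subseteq> UU" and c: "c < 2*r"
  shows "(\<Sum>q'<r. card {i\<in>{..<s}. (other c q', i) \<in> beta Z c}) \<le> card (beta Z c)"
proof -
  let ?S = "\<lambda>q'. Pair (other c q') ` {i\<in>{..<s}. (other c q', i) \<in> beta Z c}"
  have "beta Z c \<subseteq> UU" using beta_sub[OF Z c] by blast
  hence fb: "finite (beta Z c)" using finite_UU by (rule finite_subset)
  have inj: "other c q1 = other c q2 \<Longrightarrow> q1 = q2" for q1 q2 unfolding other_def by (auto split: if_splits)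
  have "(\<Sum>q'<r. card {i\<in>{..<s}. (other c q', i) \<in> beta Z c}) = (\<Sum>q'<r. card (?S q'))"
    by (intro sum.cong refl) (simp add: card_image inj_on_def)
  also have "\<dots> = card (\<Union>q'<r. ?S q')"
    by (rule card_UN_disjoint[symmetric]) (auto dest: inj)
  also have "\<dots> \<le> card (beta Z c)" by (rule card_mono[OF fb]) auto
  finally show ?thesis .
qed

lemma sum_split2: "(\<Sum>c<2*r. f c) = (\<Sum>p<r. f p) + (\<Sum>q<r. f (r+q))"
proof -
  have e: "{..<2*r} = {..<r} \<union> {r..<r+r}" by auto
  have "(\<Sum>c<2*r. f c) = (\<Sum>p<r. f p) + (\<Sum>c\<in>{r..<r+r}. f c)"
    unfolding e by (rule sum.union_disjoint) auto
  also have "(\<Sum>c\<in>{r..<r+r}. f c) = (\<Sum>q\<in>{0..<r}. f (q+r))"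
    using sum.shift_bounds_nat_ivl[of f 0 r r] by simp
  also have "\<dots> = (\<Sum>q<r. f (r+q))" by (simp add: atLeast0LessThan add.commute)
  finally show ?thesis .
qed

lemma per_Z:
  assumes Z: "Z \<subseteq> UU"
  shows "(\<Sum>pq\<in>{..<r}\<times>{..<r}. card (II Z (fst pq) (snd pq)))
           \<le> s * card (badp Z) + (\<Sum>c<2*r. card (beta Z c))"
proof -
  define g where "g p q = card {i\<in>{..<s}. (r+q,i) \<in> beta Z p}" for p q
  define h where "h p q = card {i\<in>{..<s}. (p,i) \<in> beta Z (r+q)}" for p q
  have pt: "card (II Z p q) \<le> (if tval Z p q = None then s else 0) + g p q + h p q"
    if pq: "p < r" "q < r" for p q
  proof (cases "tval Z p q = None")
    case True
    have "card (II Z p q) \<le> card {..<s}" by (rule card_mono) (auto simp: II_def)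
    thus ?thesis using True by simp
  next
    case False
    have "II Z p q \<subseteq> {i\<in>{..<s}. (r+q,i) \<in> beta Z p} \<union> {i\<in>{..<s}. (p,i) \<in> beta Z (r+q)}"
      using good_cover[OF Z pq _ False] unfolding II_def by auto
    hence "card (II Z p q) \<le> card ({i\<in>{..<s}. (r+q,i) \<in> beta Z p} \<union> {i\<in>{..<s}. (p,i) \<in> beta Z (r+q)})"
      by (intro card_mono) auto
    also have "\<dots> \<le> g p q + h p q" unfolding g_def h_def by (rule card_Un_le)
    finally show ?thesis using False by simp
  qed
  have "(\<Sum>pq\<in>{..<r}\<times>{..<r}. card (II Z (fst pq) (snd pq)))
      \<le> (\<Sum>pq\<in>{..<r}\<times>{..<r}. (if tval Z (fst pq) (snd pq) = None then s else 0) + g (fst pq) (snd pq) + h (fst pq) (snd pq))"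
  proof (rule sum_mono)
    fix pq assume "pq \<in> {..<r}\<times>{..<r}"
    thus "card (II Z (fst pq) (snd pq)) \<le> (if tval Z (fst pq) (snd pq) = None then s else 0) + g (fst pq) (snd pq) + h (fst pq) (snd pq)"
      using pt[of "fst pq" "snd pq"] by auto
  qed
  also have "\<dots> = (\<Sum>pq\<in>{..<r}\<times>{..<r}. (if tval Z (fst pq) (snd pq) = None then s else 0))
      + (\<Sum>pq\<in>{..<r}\<times>{..<r}. g (fst pq) (snd pq)) + (\<Sum>pq\<in>{..<r}\<times>{..<r}. h (fst pq) (snd pq))"
    by (simp add: sum.distrib)
  also have "(\<Sum>pq\<in>{..<r}\<times>{..<r}. (if tval Z (fst pq) (snd pq) = None then s else 0)) = s * card (badp Z)"
    unfolding badp_def by (simp add: sum.If_cases Int_def)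
  also have "(\<Sum>pq\<in>{..<r}\<times>{..<r}. g (fst pq) (snd pq)) = (\<Sum>p<r. \<Sum>q<r. g p q)"
    by (simp add: sum.cartesian_product case_prod_beta')
  also have "\<dots> \<le> (\<Sum>p<r. card (beta Z p))"
  proof (rule sum_mono)
    fix p assume "p \<in> {..<r}"
    hence p: "p < r" "p < 2*r" by auto
    have "(\<Sum>q<r. g p q) = (\<Sum>q<r. card {i\<in>{..<s}. (other p q, i) \<in> beta Z p})"
      unfolding g_def other_def using p by simp
    also have "\<dots> \<le> card (beta Z p)" by (rule beta_row_sum[OF Z p(2)])
    finally show "(\<Sum>q<r. g p q) \<le> card (beta Z p)" .
  qed
  also have "(\<Sum>pq\<in>{..<r}\<times>{..<r}. h (fst pq) (snd pq)) = (\<Sum>q<r. \<Sum>p<r. h p q)"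
  proof -
    have "(\<Sum>pq\<in>{..<r}\<times>{..<r}. h (fst pq) (snd pq)) = (\<Sum>p<r. \<Sum>q<r. h p q)"
      by (simp add: sum.cartesian_product case_prod_beta')
    also have "\<dots> = (\<Sum>q<r. \<Sum>p<r. h p q)" by (rule sum.swap)
    finally show ?thesis .
  qed
  also have "\<dots> \<le> (\<Sum>q<r. card (beta Z (r+q)))"
  proof (rule sum_mono)
    fix q assume "q \<in> {..<r}"
    hence q: "r+q < 2*r" by auto
    have "(\<Sum>p<r. h p q) = (\<Sum>p<r. card {i\<in>{..<s}. (other (r+q) p, i) \<in> beta Z (r+q)})"
      unfolding h_def other_def by simp
    also have "\<dots> \<le> card (beta Z (r+q))" by (rule beta_row_sum[OF Z q])
    finally show "(\<Sum>p<r. h p q) \<le> card (beta Z (r+q))" .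
  qed
  finally show ?thesis using sum_split2[of "\<lambda>c. card (beta Z c)"] by simp
qed

lemma sum_II:
  assumes pq: "p < r" "q < r"
  shows "4 * (\<Sum>Z\<in>Pow UU. card (II Z p q)) = s * 2^card UU"
proof -
  have ci: "card (II Z p q) = (\<Sum>i<s. if (p,i)\<in>Z \<and> (r+q,i)\<in>Z then 1 else 0)" for Z
    unfolding II_def by (simp add: sum.If_cases Int_def)
  have "(\<Sum>Z\<in>Pow UU. card (II Z p q)) = (\<Sum>i<s. \<Sum>Z\<in>Pow UU. if (p,i)\<in>Z \<and> (r+q,i)\<in>Z then 1 else 0)"
    unfolding ci by (rule sum.swap)
  also have "\<dots> = (\<Sum>i<s. card {Z\<in>Pow UU. (p,i)\<in>Z \<and> (r+q,i)\<in>Z})"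
  proof (rule sum.cong[OF refl])
    fix i
    have "card {Z\<in>Pow UU. (p,i)\<in>Z \<and> (r+q,i)\<in>Z} = (\<Sum>Z\<in>{Z\<in>Pow UU. (p,i)\<in>Z \<and> (r+q,i)\<in>Z}. 1)"
      by simp
    also have "\<dots> = (\<Sum>Z\<in>Pow UU. if (p,i)\<in>Z \<and> (r+q,i)\<in>Z then 1 else 0)"
      by (rule sum.inter_filter) (simp add: finite_UU)
    finally show "(\<Sum>Z\<in>Pow UU. if (p,i)\<in>Z \<and> (r+q,i)\<in>Z then 1 else 0) = card {Z\<in>Pow UU. (p,i)\<in>Z \<and> (r+q,i)\<in>Z}" by simp
  qed
  finally have "4 * (\<Sum>Z\<in>Pow UU. card (II Z p q)) = (\<Sum>i<s. 4 * card {Z\<in>Pow UU. (p,i)\<in>Z \<and> (r+q,i)\<in>Z})"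
    by (simp add: sum_distrib_left)
  also have "\<dots> = (\<Sum>i<s. 2^card UU)"
  proof (rule sum.cong[OF refl])
    fix i assume "i \<in> {..<s}"
    hence "(p,i) \<in> UU" "(r+q,i) \<in> UU" "(p,i) \<noteq> (r+q,i)" using pq unfolding UU_def by auto
    thus "4 * card {Z\<in>Pow UU. (p,i)\<in>Z \<and> (r+q,i)\<in>Z} = 2^card UU" by (rule pow_pair[OF finite_UU])
  qed
  finally show ?thesis by simp
qed

lemma averaging:
  assumes big: "16*(2*MM+3) \<le> r*s"
  shows "\<exists>Z. Z \<subseteq> UU \<and> r*r \<le> 8*card (badp Z)"
proof (rule ccontr)
  assume na: "\<not> ?thesis"
  have small: "8*card (badp Z) + 1 \<le> r*r" if zu: "Z \<subseteq> UU" for Z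
  proof -
    have "\<not> r*r \<le> 8*card (badp Z)" using na zu by blast
    thus ?thesis by simp
  qed
  define P where "P = (2::nat)^card UU"
  define X where "X = (\<Sum>Z\<in>Pow UU. card (badp Z))"
  have cb: "(\<Sum>Z\<in>Pow UU. card (beta Z c)) \<le> (2*MM+3) * P" if c: "c < 2*r" for c
    unfolding P_def
  proof (rule count_beta[where view = "\<lambda>Z. view Z c" and R = "row c"])
    show "finite UU" by (rule finite_UU)
    show "row c \<subseteq> UU" using c unfolding row_def UU_def by auto
    show "beta Z c = beta Z' c \<and> Z \<inter> row c = Z' \<inter> row c"
      if "Z \<subseteq> UU" "Z' \<subseteq> UU" "view Z c = view Z' c" for Z Z'
      using beta_inv[OF that] that(3) unfolding view_def by simp
    show "beta Z c \<subseteq> Z \<inter> (UU - row c)" if "Z \<subseteq> UU" for Z using beta_sub[OF that c] .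
    show "card ((\<lambda>Z. view Z c) ` Pow UU) \<le> 2 ^ card (row c) * 2 ^ MM" by (rule card_view[OF c])
  qed
  have "r*r*s*P = (\<Sum>pq\<in>{..<r}\<times>{..<r}. s * P)" by simp
  also have "\<dots> = (\<Sum>pq\<in>{..<r}\<times>{..<r}. 4 * (\<Sum>Z\<in>Pow UU. card (II Z (fst pq) (snd pq))))"
    unfolding P_def by (intro sum.cong refl) (auto simp: sum_II)
  also have "\<dots> = 4 * (\<Sum>pq\<in>{..<r}\<times>{..<r}. \<Sum>Z\<in>Pow UU. card (II Z (fst pq) (snd pq)))"
    by (simp add: sum_distrib_left)
  also have "4 * (\<Sum>pq\<in>{..<r}\<times>{..<r}. \<Sum>Z\<in>Pow UU. card (II Z (fst pq) (snd pq)))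
      = 4 * (\<Sum>Z\<in>Pow UU. \<Sum>pq\<in>{..<r}\<times>{..<r}. card (II Z (fst pq) (snd pq)))"
    by (subst sum.swap) (rule refl)
  also have "\<dots> \<le> 4 * (\<Sum>Z\<in>Pow UU. s * card (badp Z) + (\<Sum>c<2*r. card (beta Z c)))"
    by (intro mult_le_mono2 sum_mono per_Z) auto
  also have "4 * (\<Sum>Z\<in>Pow UU. s * card (badp Z) + (\<Sum>c<2*r. card (beta Z c)))
       = 4 * (s * X + (\<Sum>Z\<in>Pow UU. \<Sum>c<2*r. card (beta Z c)))"
    unfolding X_def by (simp add: sum.distrib sum_distrib_left)
  also have "4 * (s * X + (\<Sum>Z\<in>Pow UU. \<Sum>c<2*r. card (beta Z c))) = 4 * (s * X + (\<Sum>c<2*r. \<Sum>Z\<in>Pow UU. card (beta Z c)))"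
    by (subst sum.swap) (rule refl)
  also have "(\<Sum>c<2*r. \<Sum>Z\<in>Pow UU. card (beta Z c)) \<le> (\<Sum>c<2*r. (2*MM+3) * P)"
    by (rule sum_mono) (use cb in auto)
  also have "(\<Sum>c<2*r. (2*MM+3) * P) = 2*r*(2*MM+3)*P" by simp
  finally have i1: "r*r*s*P \<le> 4*s*X + 8*r*(2*MM+3)*P" by simp
  have i2: "8*X + P \<le> r*r*P"
  proof -
    have "(\<Sum>Z\<in>Pow UU. 8*card (badp Z) + 1) = (\<Sum>Z\<in>Pow UU. 8*card (badp Z)) + (\<Sum>Z\<in>Pow UU. 1)"
      by (rule sum.distrib)
    also have "(\<Sum>Z\<in>Pow UU. (1::nat)) = P" unfolding P_def using finite_UU by (simp add: card_Pow)
    also have "(\<Sum>Z\<in>Pow UU. 8*card (badp Z)) = 8*X" unfolding X_def by (simp add: sum_distrib_left)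
    finally have "8*X + P = (\<Sum>Z\<in>Pow UU. 8*card (badp Z) + 1)" by simp
    also have "\<dots> \<le> (\<Sum>Z\<in>Pow UU. r*r)" by (rule sum_mono) (use small in auto)
    also have "\<dots> = r*r*P" unfolding P_def using finite_UU by (simp add: card_Pow)
    finally show ?thesis .
  qed
  have i3: "16*r*(2*MM+3)*P \<le> r*r*s*P"
  proof -
    have "r*(16*(2*MM+3))*P \<le> r*(r*s)*P" using big by (intro mult_le_mono1 mult_le_mono2)
    thus ?thesis by (simp add: mult_ac)
  qed
  have a1: "2*(r*r*s*P) \<le> 8*(s*X) + 16*r*(2*MM+3)*P" using i1 by simp
  have a3: "8*(s*X) + s*P \<le> r*r*s*P"
  proof -
    have "s*(8*X + P) \<le> s*(r*r*P)" using i2 by (rule mult_le_mono2)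
    thus ?thesis by (simp add: algebra_simps)
  qed
  have "0 < s*P" using s_pos unfolding P_def by simp
  thus False using a1 a3 i3 by linarith
qed

end


context LB
begin

lemma phase_of_round:
  assumes "p < r" "q < r" "1 \<le> y" "y \<le> L"
  shows "(start p q + y - 1) div L = p*r+q"
proof -
  have "start p q + y - 1 = (p*r+q)*L + (y-1)" using assms(3) unfolding start_def by simp
  moreover have "y - 1 < L" using assms(3,4) by simp
  ultimately show ?thesis by simp
qed

lemma phase_inj:
  assumes "p < r" "q < r" "p' < r" "q' < r" "p*r+q = p'*r+q'"
  shows "p = p' \<and> q = q'"
proof -
  have "p = (p*r+q) div r" using assms(2) by simp
  also have "\<dots> = (p'*r+q') div r" using assms(5) by simp
  also have "\<dots> = p'" using assms(4) by simp
  finally have a: "p = p'" .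
  have "q = (p*r+q) mod r" using assms(2) by simp
  also have "\<dots> = (p'*r+q') mod r" using assms(5) by simp
  also have "\<dots> = q'" using assms(4) by simp
  finally show ?thesis using a by simp
qed

lemma incons_bound:
  assumes Z: "Z \<subseteq> UU"
  shows "(L-1) * card (badp Z) \<le> incons_rounds A n (GZ Z) (r*r*L)"
proof -
  let ?S = "\<lambda>pq. (\<lambda>x. start (fst pq) (snd pq) + x) ` {2..L}"
  let ?I = "{j \<in> {1..r*r*L}. \<exists>v<n. dincons A n v (run A n (GZ Z) j v)}"
  have sub: "?S pq \<subseteq> ?I" if pq: "pq \<in> badp Z" for pq
  proof
    fix t assume "t \<in> ?S pq"
    then obtain x where x0: "t = start (fst pq) (snd pq) + x" "x \<in> {2..L}" by (rule imageE)
    hence x: "x \<in> {2..L}" "t = start (fst pq) (snd pq) + x" by auto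
    obtain p q where pqd: "pq = (p,q)" "p < r" "q < r" "tval Z p q = None"
      using pq unfolding badp_def by auto
    have "\<not> allcons Z p q (start p q + x)" using pqd(4) x(1) unfolding tval_def by (auto split: if_splits)
    then obtain v where v: "v \<in> comp p \<union> comp (r+q)" "dincons A n v (st Z t v)"
      using x(2) pqd(1) unfolding allcons_def by auto
    have "v < n" using v(1) comp_lt_n[of p v] comp_lt_n[of "r+q" v] pqd by auto
    moreover have "1 \<le> t" using x by auto
    moreover have "t \<le> r*r*L"
    proof -
      have "t \<le> (p*r+q)*L + L" using x pqd(1) unfolding start_def by simp
      also have "\<dots> = (p*r+q+1)*L" by simp
      also have "\<dots> \<le> r*r*L" using phase_lt[OF pqd(2,3)] by (intro mult_le_mono1) simp
      finally show ?thesis .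
    qed
    ultimately show "t \<in> ?I" using v(2) unfolding st_def by auto
  qed
  have disj: "?S pq1 \<inter> ?S pq2 = {}" if "pq1 \<in> badp Z" "pq2 \<in> badp Z" "pq1 \<noteq> pq2" for pq1 pq2
  proof (rule ccontr)
    assume "?S pq1 \<inter> ?S pq2 \<noteq> {}"
    then obtain t where t: "t \<in> ?S pq1" "t \<in> ?S pq2" by blast
    obtain x1 where x1: "t = start (fst pq1) (snd pq1) + x1" "x1 \<in> {2..L}" using t(1) by (rule imageE)
    obtain x2 where x2: "t = start (fst pq2) (snd pq2) + x2" "x2 \<in> {2..L}" using t(2) by (rule imageE)
    have xx: "x1 \<in> {2..L}" "x2 \<in> {2..L}"
      "start (fst pq1) (snd pq1) + x1 = start (fst pq2) (snd pq2) + x2" using x1 x2 by auto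
    have b: "fst pq1 < r" "snd pq1 < r" "fst pq2 < r" "snd pq2 < r" using that unfolding badp_def by auto
    have "(start (fst pq1) (snd pq1) + (x1-1) - 1) div L = fst pq1 * r + snd pq1"
      using phase_of_round[OF b(1,2), of "x1-1"] xx(1) by auto
    moreover have "(start (fst pq2) (snd pq2) + (x2-1) - 1) div L = fst pq2 * r + snd pq2"
      using phase_of_round[OF b(3,4), of "x2-1"] xx(2) by auto
    moreover have "start (fst pq1) (snd pq1) + (x1-1) - 1 = start (fst pq2) (snd pq2) + (x2-1) - 1"
      using xx by auto
    ultimately have "fst pq1 * r + snd pq1 = fst pq2 * r + snd pq2" by simp
    hence "fst pq1 = fst pq2 \<and> snd pq1 = snd pq2" using phase_inj b by blast
    thus False using that(3) by (simp add: prod_eq_iff)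
  qed
  have fb: "finite (badp Z)" unfolding badp_def by simp
  have cS: "card (?S pq) = L - 1" for pq
    by (subst card_image) (auto simp: inj_on_def)
  have "(L-1) * card (badp Z) = (\<Sum>pq\<in>badp Z. card (?S pq))" using cS by simp
  also have "\<dots> = card (\<Union>pq\<in>badp Z. ?S pq)"
    by (rule card_UN_disjoint[symmetric]) (use fb disj in auto)
  also have "\<dots> \<le> card ?I" by (rule card_mono) (use sub in auto)
  also have "\<dots> = incons_rounds A n (GZ Z) (r*r*L)" unfolding incons_rounds_def by simp
  finally show ?thesis .
qed

lemma card_compE:
  assumes Z: "Z \<subseteq> UU"
  shows "finite (compE c Z) \<and> card (compE c Z) \<le> d + 2*s"
proof -
  let ?A1 = "(\<lambda>m. {node c m, node c (Suc m)}) ` {m. m < d}"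
  let ?A2 = "(\<lambda>i. {node c d, node c (d+2+i)}) ` {i. (c,i) \<in> Z}"
  let ?A3 = "(\<lambda>i. {node c (d+2+i), node c (d+1)}) ` {i. (c,i) \<in> Z}"
  have e: "compE c Z = ?A1 \<union> ?A2 \<union> ?A3" unfolding compE_def by (simp add: setcompr_eq_image)
  have si: "{i. (c,i) \<in> Z} \<subseteq> {..<s}" using Z unfolding UU_def by auto
  have fi: "finite {i. (c,i) \<in> Z}" using finite_subset[OF si] by simp
  have ci: "card {i. (c,i) \<in> Z} \<le> s" using card_mono[OF _ si] by simp
  have c1: "card ?A1 \<le> d" using card_image_le[of "{m. m < d}"] by simp
  have c2: "card ?A2 \<le> s" using card_image_le[OF fi] ci le_trans by blast
  have c3: "card ?A3 \<le> s" using card_image_le[OF fi] ci le_trans by blast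
  have f: "finite ?A1" "finite ?A2" "finite ?A3" using fi by auto
  have "card (compE c Z) \<le> card ?A1 + card ?A2 + card ?A3"
    unfolding e by (meson add_le_mono1 card_Un_le le_trans)
  thus ?thesis using c1 c2 c3 f e by simp
qed

lemma card_static:
  assumes Z: "Z \<subseteq> UU"
  shows "finite (static Z) \<and> card (static Z) \<le> 2*r*(d+2*s)"
proof -
  have "card (static Z) \<le> (\<Sum>c<2*r. card (compE c Z))" unfolding static_def by (rule card_UN_le) simp
  also have "\<dots> \<le> (\<Sum>c<2*r. d + 2*s)" by (rule sum_mono) (use card_compE[OF Z] in auto)
  finally show ?thesis unfolding static_def using card_compE[OF Z] by simp
qed

lemma card_cutR: "finite (cutR j) \<and> card (cutR j) \<le> 2"
proof -
  have "card {x::nat set, y} \<le> 2" for x y by (simp add: card_insert_if)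
  thus ?thesis unfolding cutR_def cutP_def by auto
qed

lemma cutR_same:
  assumes "2 \<le> j" "(j-1) mod L \<noteq> 0"
  shows "cutR j = cutR (j-1)"
proof -
  obtain m where m: "j - 1 = Suc m" "j - 1 - 1 = m" using assms(1) by (cases "j-1") auto
  have "Suc m mod L \<noteq> 0" using assms(2) m(1) by simp
  hence "(j-1) div L = (j-1-1) div L" using m div_Suc[of m L] by simp
  thus ?thesis using assms(1) unfolding cutR_def by simp
qed

lemma changes_bound:
  assumes Z: "Z \<subseteq> UU"
  shows "changes (GZ Z) (r*r*L) \<le> 2*r*(d+2*s) + 2 + 4*(r*r)"
proof -
  let ?T = "r*r*L"
  define D where "D j = card ((GZ Z j - GZ Z (j - 1)) \<union> (GZ Z (j - 1) - GZ Z j))" for j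
  have T1: "1 \<le> ?T" using r_pos L2 by simp
  have fG: "finite (GZ Z j)" for j using card_static[OF Z] card_cutR unfolding GZ_def by auto
  have D1: "D 1 \<le> 2*r*(d+2*s) + 2"
  proof -
    have "D 1 = card (static Z \<union> cutR 1)" unfolding D_def GZ_def by simp
    also have "\<dots> \<le> card (static Z) + card (cutR 1)" by (rule card_Un_le)
    finally show ?thesis using card_static[OF Z] card_cutR[of 1] by simp
  qed
  have Dj: "D j \<le> (if (j-1) mod L = 0 then 4 else 0)" if j: "2 \<le> j" for j
  proof (cases "(j-1) mod L = 0")
    case False
    hence "GZ Z j = GZ Z (j-1)" using cutR_same[OF j False] j unfolding GZ_def by simp
    thus ?thesis unfolding D_def using False by simp
  next
    case True
    have "(GZ Z j - GZ Z (j - 1)) \<union> (GZ Z (j - 1) - GZ Z j) \<subseteq> cutR j \<union> cutR (j-1)"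
      using j unfolding GZ_def by auto
    hence "D j \<le> card (cutR j \<union> cutR (j-1))" unfolding D_def
      by (intro card_mono) (use card_cutR in auto)
    also have "\<dots> \<le> card (cutR j) + card (cutR (j-1))" by (rule card_Un_le)
    finally show ?thesis using True card_cutR[of j] card_cutR[of "j-1"] by simp
  qed
  have "changes (GZ Z) ?T = (\<Sum>j\<in>{1..?T}. D j)" unfolding changes_def D_def by simp
  also have "{1..?T} = insert 1 {2..?T}" using T1 by auto
  also have "(\<Sum>j\<in>insert 1 {2..?T}. D j) = D 1 + (\<Sum>j\<in>{2..?T}. D j)" by simp
  also have "(\<Sum>j\<in>{2..?T}. D j) \<le> (\<Sum>j\<in>{2..?T}. if (j-1) mod L = 0 then 4 else 0)"
    by (rule sum_mono) (use Dj in auto)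
  also have "\<dots> = 4 * card {j\<in>{2..?T}. (j-1) mod L = 0}"
  proof -
    have "(\<Sum>j\<in>{2..?T}. if (j-1) mod L = 0 then 4 else 0) = (\<Sum>j\<in>{j\<in>{2..?T}. (j-1) mod L = 0}. 4::nat)"
      by (rule sum.inter_filter[symmetric]) simp
    thus ?thesis by simp
  qed
  also have "card {j\<in>{2..?T}. (j-1) mod L = 0} \<le> r*r"
  proof -
    have "{j\<in>{2..?T}. (j-1) mod L = 0} \<subseteq> (\<lambda>f. f*L+1) ` {1..<r*r}"
    proof
      fix j assume "j \<in> {j\<in>{2..?T}. (j-1) mod L = 0}"
      hence j: "2 \<le> j" "j \<le> ?T" "(j-1) mod L = 0" by auto
      define f where "f = (j-1) div L"
      have jf: "j - 1 = f*L" using j(3) unfolding f_def by (metis add_0_right div_mult_mod_eq)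
      have "1 \<le> f" using jf j(1) by (cases f) auto
      moreover have "f < r*r"
      proof (rule ccontr)
        assume "\<not> f < r*r"
        hence "r*r*L \<le> f*L" by (intro mult_le_mono1) simp
        thus False using jf j(1,2) by linarith
      qed
      moreover have "j = f*L+1" using jf j(1) by simp
      ultimately show "j \<in> (\<lambda>f. f*L+1) ` {1..<r*r}" by auto
    qed
    hence "card {j\<in>{2..?T}. (j-1) mod L = 0} \<le> card ((\<lambda>f. f*L+1) ` {1..<r*r})"
      by (intro card_mono) auto
    also have "\<dots> \<le> card {1..<r*r}" by (rule card_image_le) simp
    finally show ?thesis by simp
  qed
  finally show ?thesis using D1 by simp
qed

lemma main_ineq:
  assumes am: "amortized_at_most A n C" and C0: "0 \<le> C" and big: "16*(2*MM+3) \<le> r*s"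
  shows "real ((L-1)*(r*r)) \<le> 8 * C * real (2*r*(d+2*s) + 2 + 4*(r*r))"
proof -
  obtain Z where Z: "Z \<subseteq> UU" "r*r \<le> 8*card (badp Z)" using averaging[OF big] by blast
  have "(L-1)*(r*r) \<le> (L-1)*(8*card (badp Z))" using Z(2) by (rule mult_le_mono2)
  also have "\<dots> = 8*((L-1)*card (badp Z))" by simp
  also have "\<dots> \<le> 8*incons_rounds A n (GZ Z) (r*r*L)" using incons_bound[OF Z(1)] by simp
  finally have i1: "real ((L-1)*(r*r)) \<le> 8 * real (incons_rounds A n (GZ Z) (r*r*L))" by linarith
  have "real (incons_rounds A n (GZ Z) (r*r*L)) \<le> C * real (changes (GZ Z) (r*r*L))"
    using am valid_GZ[OF Z(1)] unfolding amortized_at_most_def by blast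
  also have "\<dots> \<le> C * real (2*r*(d+2*s) + 2 + 4*(r*r))"
  proof (rule mult_left_mono[OF _ C0])
    show "real (changes (GZ Z) (r*r*L)) \<le> real (2*r*(d+2*s) + 2 + 4*(r*r))"
      using changes_bound[OF Z(1)] by (simp only: of_nat_le_iff)
  qed
  finally show ?thesis using i1 by linarith
qed

end


lemma sqrt_ln_bound:
  fixes x :: real
  assumes "3 \<le> x"
  shows "1 \<le> ln x" "ln x < 4 * sqrt (sqrt x)"
proof -
  have "exp 1 \<le> x" using exp_le assms by linarith
  thus "1 \<le> ln x" using ln_ge_iff[of x 1] assms by simp
  have pos: "0 < sqrt (sqrt x)" using assms by simp
  have "ln (sqrt (sqrt x)) = ln x / 4" using assms by (simp add: ln_sqrt)
  thus "ln x < 4 * sqrt (sqrt x)" using ln_less_self[OF pos] by simp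
qed

theorem theorem5:
  fixes k :: nat
  assumes "k \<ge> 6"
  shows "\<forall>c>0. \<exists>\<epsilon>>0. \<exists>N. \<forall>n\<ge>N. \<forall>A :: 's dds.
           bandwidth A n c \<and> lists_kcycles A n k \<longrightarrow>
           \<not> amortized_at_most A n (\<epsilon> * sqrt (real n) / ln (real n))"
proof (intro allI impI)
  fix c :: real assume c: "c > 0"
  define K0 where "K0 = 2*c+3"
  define eps where "eps = 1/(88*128*K0)"
  define Kb where "Kb = 384*K0+1"
  define d where "d = k - 6"
  define N where "N = nat \<lceil>(4*Kb)^4\<rceil> + (2*(4*d+52)+2)^2 + 3"
  have K0: "3 \<le> K0" using c unfolding K0_def by simp
  have eps: "eps > 0" using K0 unfolding eps_def by simp
  show "\<exists>\<epsilon>>0. \<exists>N. \<forall>n\<ge>N. \<forall>A :: 's dds.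
           bandwidth A n c \<and> lists_kcycles A n k \<longrightarrow>
           \<not> amortized_at_most A n (\<epsilon> * sqrt (real n) / ln (real n))"
  proof (intro exI[of _ eps] conjI exI[of _ N] allI impI eps)
    fix n :: nat and A :: "'s dds"
    assume nN: "N \<le> n" and h: "bandwidth A n c \<and> lists_kcycles A n k"
    define x where "x = sqrt (real n)"
    define l where "l = ln (real n)"
    define C where "C = eps * sqrt (real n) / ln (real n)"
    show "\<not> amortized_at_most A n (eps * sqrt (real n) / ln (real n))"
    proof
      assume am: "amortized_at_most A n (eps * sqrt (real n) / ln (real n))"
      have n3: "3 \<le> real n" using nN unfolding N_def by simp
      have l1: "1 \<le> l" and l4: "l < 4 * sqrt (sqrt (real n))" using sqrt_ln_bound[OF n3] unfolding l_def by auto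
      have Kb0: "0 < Kb" using K0 unfolding Kb_def by simp
      have yb: "4*Kb \<le> sqrt (sqrt (real n))"
      proof -
        have "(4*Kb)^4 \<le> real n"
        proof -
          have "(4*Kb)^4 \<le> real (nat \<lceil>(4*Kb)^4\<rceil>)" by linarith
          also have "\<dots> \<le> real n" using nN unfolding N_def by simp
          finally show ?thesis .
        qed
        hence "sqrt (sqrt ((4*Kb)^4)) \<le> sqrt (sqrt (real n))" by (intro real_sqrt_le_mono)
        moreover have "sqrt (sqrt ((4*Kb)^4)) = 4*Kb"
        proof -
          have "(4*Kb)^4 = ((4*Kb)^2)^2" by simp
          hence "sqrt ((4*Kb)^4) = (4*Kb)^2" by (simp only: real_sqrt_abs abs_power2)
          hence "sqrt (sqrt ((4*Kb)^4)) = \<bar>4*Kb\<bar>" by (simp only: real_sqrt_abs)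
          thus ?thesis using Kb0 by simp
        qed
        ultimately show ?thesis by linarith
      qed
      define y where "y = sqrt (sqrt (real n))"
      have y0: "0 < y" using n3 unfolding y_def by simp
      have xy: "x = y^2" unfolding x_def y_def by simp
      have x0: "0 < x" using n3 unfolding x_def by simp
      have l0: "0 < l" using l1 by simp
      have q: "Kb \<le> x / l"
      proof -
        have "x / (4*y) < x / l" using l4 l0 x0 unfolding y_def[symmetric]
          by (intro divide_strict_left_mono) auto
        moreover have "x / (4*y) = y / 4" using y0 unfolding xy by (simp add: power2_eq_square)
        moreover have "Kb \<le> y / 4" using yb unfolding y_def[symmetric] by simp
        ultimately show ?thesis by linarith
      qed
      have xbig: "real (2*(4*d+52)+2) \<le> x"
      proof -
        have "real ((2*(4*d+52)+2)^2) \<le> real n" using nN unfolding N_def by linarith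
        hence "sqrt (real ((2*(4*d+52)+2)^2)) \<le> x" unfolding x_def by (intro real_sqrt_le_mono)
        thus ?thesis by (simp only: of_nat_power real_sqrt_abs)
      qed
      define s where "s = nat \<lfloor>x/2\<rfloor>"
      have s1: "real s \<le> x/2" "x/2 - 1 < real s" using x0 unfolding s_def by linarith+
      have "real (4*d+52) < real s" using s1 xbig by simp
      hence s48: "48 \<le> s" "4*d+4 \<le> s" by linarith+
      define b where "b = nat \<lfloor>c * l\<rfloor>"
      have cl: "0 \<le> c * l" using c l0 by simp
      have breal: "real b \<le> c * l" unfolding b_def using cl by linarith
      have bw: "length (dmsg A n v st I D u) \<le> b" for v st I D u
      proof -
        have "real (length (dmsg A n v st I D u)) \<le> c * l"
          using h unfolding bandwidth_def l_def by blast
        hence "int (length (dmsg A n v st I D u)) \<le> \<lfloor>c * l\<rfloor>" by (simp add: le_floor_iff)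
        thus ?thesis unfolding b_def by linarith
      qed
      define D where "D = 32*(2*b+3)"
      define L where "L = (s - 1) div D"
      have D0: "0 < D" unfolding D_def by simp
      have Dreal: "real D \<le> 32*K0*l"
      proof -
        have "real D = 32*(2*real b+3)" unfolding D_def by simp
        also have "\<dots> \<le> 32*(2*(c*l)+3*l)" using breal l1 by simp
        also have "\<dots> = 32*K0*l" unfolding K0_def by (simp add: algebra_simps)
        finally show ?thesis .
      qed
      have LD: "L * D \<le> s - 1" unfolding L_def by (metis div_mult_mod_eq le_add1)
      have Lreal: "(real s - 1) / real D < real L + 1"
      proof -
        have "s - 1 = L * D + (s - 1) mod D" unfolding L_def by simp
        moreover have "(s - 1) mod D < D" using D0 by simp
        ultimately have "s - 1 < (L + 1) * D" by simp
        hence "real (s - 1) < (real L + 1) * real D" by (metis of_nat_1 of_nat_add of_nat_less_iff of_nat_mult)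
        moreover have "real (s - 1) = real s - 1" using s48 by simp
        ultimately show ?thesis using D0 by (simp add: divide_less_eq)
      qed
      have R2: "(x/2 - 2)/(32*K0*l) \<le> (real s - 1)/real D"
        by (rule frac_le) (use s1 s48 D0 Dreal in auto)
      have R3: "(x/2 - 2)/(32*K0*l) = (x/l)/(64*K0) - 1/(16*K0*l)"
        using K0 l0 by (simp add: field_simps)
      have R4: "1/(16*K0*l) \<le> 1"
      proof -
        have "1*1 \<le> K0 * l" using K0 l1 by (intro mult_mono) auto
        hence "1 \<le> 16*K0*l" by simp
        thus ?thesis by simp
      qed
      have R5: "3 \<le> (x/l)/(128*K0)"
      proof -
        have "3*(128*K0) \<le> x/l" using q unfolding Kb_def by simp
        thus ?thesis using K0 by (subst le_divide_eq) auto
      qed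
      have R6: "(x/l)/(64*K0) = 2 * ((x/l)/(128*K0))" using K0 by (simp add: field_simps)
      have C88: "88 * C = (x/l)/(128*K0)" unfolding C_def eps_def x_def l_def using K0 by (simp add: field_simps)
      have key: "88*C + 1 < real L" using Lreal R2 R3 R4 R5 R6 C88 by linarith
      have C0: "0 \<le> C" unfolding C_def using eps l0 x0 unfolding x_def l_def by simp
      have L2: "2 \<le> L" using key C0 by linarith
      have nbig: "2*s*(s+d+2) \<le> n"
      proof -
        have "s+d+2 \<le> 2*s" using s48 by simp
        hence "2*s*(s+d+2) \<le> 2*s*(2*s)" by (rule mult_le_mono2)
        moreover have "real (2*s*(2*s)) \<le> real n"
        proof -
          have "real (2*s) \<le> x" using s1 by simp
          hence "real (2*s) * real (2*s) \<le> x * x" by (intro mult_mono) auto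
          also have "x * x = real n" unfolding x_def by simp
          finally show ?thesis by simp
        qed
        ultimately show ?thesis by linarith
      qed
      interpret LB A n k s s d L b
      proof
        show "k = d + 6" using assms unfolding d_def by simp
        show "1 \<le> s" using s48 by simp
        show "2 \<le> L" by (rule L2)
        show "2*s*(s+d+2) \<le> n" by (rule nbig)
        show "length (dmsg A n v st I D u) \<le> b" for v st I D u by (rule bw)
        show "lists_kcycles A n k" using h by simp
      qed
      have big: "16*(2*MM+3) \<le> s*s"
      proof -
        have "16*(2*MM) = s*(L*D)" unfolding MM_def D_def by (simp add: algebra_simps)
        also have "\<dots> \<le> s*(s-1)" using LD by simp
        finally have "16*(2*MM) + 48 \<le> s*(s-1) + s" using s48 by simp
        also have "s*(s-1) + s = s*s" using s48 by (cases s) auto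
        finally show ?thesis by simp
      qed
      have am': "amortized_at_most A n C" using am unfolding C_def .
      have mi: "real ((L-1)*(s*s)) \<le> 8 * C * real (2*s*(d+2*s) + 2 + 4*(s*s))"
        by (rule main_ineq[OF am' C0 big])
      have "2*s*(d+2*s) + 2 + 4*(s*s) \<le> 11*(s*s)"
      proof -
        have a: "2*s*d \<le> 2*s*s" using s48 by (intro mult_le_mono2) simp
        have b: "48*1 \<le> s*s" using s48 by (intro mult_le_mono) auto
        have "2*s*(d+2*s) + 2 + 4*(s*s) = 2*s*d + 8*(s*s) + 2" by (simp add: algebra_simps)
        thus ?thesis using a b by linarith
      qed
      hence "real (2*s*(d+2*s) + 2 + 4*(s*s)) \<le> 11 * real (s*s)" by linarith
      hence "8 * C * real (2*s*(d+2*s) + 2 + 4*(s*s)) \<le> 8 * C * (11 * real (s*s))"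
        using C0 by (intro mult_left_mono) auto
      hence "real ((L-1)*(s*s)) \<le> 8 * C * (11 * real (s*s))" using mi by linarith
      moreover have "real ((L-1)*(s*s)) = real (L-1) * real (s*s)" by (simp only: of_nat_mult)
      ultimately have "real (L-1) * real (s*s) \<le> (88 * C) * real (s*s)" by (simp only: mult_ac)
      moreover have "0 < real (s*s)" using s48 by simp
      ultimately have "real (L-1) \<le> 88 * C" by (meson mult_le_cancel_right_pos)
      thus False using key L2 by linarith
    qed
  qed
qed


end
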